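(* Assume $\sum_{k=1}^{\infty}\|\mathbb{E}_0(S_k)\|/k^{3/2}<\infty$. For $k\in\mathbb{Z}$ and $m\ge1$ let $Y_k^m=\frac{1}{m}\mathbb{E}_k(X_{k+1}+\dots+X_{k+m})$. Then there is a constant $C>0$ such that for every $n\ge1$ and every $m\ge1$ $$\frac{1}{n^{1/2}}\Big\|\max_{1\le j\le n}\Big|\sum_{k=0}^{j-1}Y_k^m\Big|\Big\|\le C\sum_{k=m+1}^{\infty}\frac{\|\mathbb{E}_0(S_k)\|}{k^{3/2}}$$ and $$\|Y_0^m\|_+\le C\sum_{k\ge m}\frac{\|\mathbb{E}_0(S_k)\|}{k^{3/2}} .$$
   Context: Let $(\Omega,\mathcal{F},\mathbb{P})$ be a probability space and let $T:\Omega\to\Omega$ be a bijective, bimeasurable, measure-preserving transformation. Let $\mathcal{F}_0\subseteq\mathcal{F}$ be a $\sigma$-algebra with $\mathcal{F}_0\subseteq T^{-1}(\mathcal{F}_0)$, and set $\mathcal{F}_i=T^{-i}(\mathcal{F}_0)$ for $i\in\mathbb{Z}$. Let $X_0$ be $\mathcal{F}_0$-measurable with $\mathbb{E}X_0=0$ and $\mathbb{E}X_0^2<\infty$. Put $X_i=X_0\circ T^i$ and $S_n=\sum_{i=0}^{n-1}X_i$. Write $\mathbb{E}_k(\cdot)=\mathbb{E}(\cdot\mid\mathcal{F}_k)$ and let $\|\cdot\|$ be the $\mathbb{L}^2$ norm. For a stationary sequence $(V_k)_{k\in\mathbb{Z}}$ of square integrable random variables let $\|V_0\|_+^2=\limsup_{n\to\infty}\frac1n\mathbb{E}\big((V_0+\dots+V_{n-1})^2\big)$;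 here $V_k=Y_k^m=Y_0^m\circ T^k$. *)

theory Defs
  imports "HOL-Probability.Probability"
begin

definition Tpow :: "'a measure \<Rightarrow> ('a \<Rightarrow> 'a) \<Rightarrow> int \<Rightarrow> 'a \<Rightarrow> 'a" where
  "Tpow M T i = (if 0 \<le> i then T ^^ nat i else inv_into (space M) T ^^ nat (- i))"

definition filt :: "'a measure \<Rightarrow> ('a \<Rightarrow> 'a) \<Rightarrow> 'a measure \<Rightarrow> int \<Rightarrow> 'a measure" where
  "filt M T F0 i = vimage_algebra (space M) (Tpow M T i) F0"

definition Xs :: "'a measure \<Rightarrow> ('a \<Rightarrow> 'a) \<Rightarrow> ('a \<Rightarrow> real) \<Rightarrow> int \<Rightarrow> 'a \<Rightarrow> real" where
  "Xs M T X0 i = (\<lambda>x. X0 (Tpow M T i x))"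

definition Ssum :: "'a measure \<Rightarrow> ('a \<Rightarrow> 'a) \<Rightarrow> ('a \<Rightarrow> real) \<Rightarrow> nat \<Rightarrow> 'a \<Rightarrow> real" where
  "Ssum M T X0 n = (\<lambda>x. \<Sum>i<n. Xs M T X0 (int i) x)"

definition condE :: "'a measure \<Rightarrow> ('a \<Rightarrow> 'a) \<Rightarrow> 'a measure \<Rightarrow> int \<Rightarrow> ('a \<Rightarrow> real) \<Rightarrow> 'a \<Rightarrow> real" where
  "condE M T F0 k f = real_cond_exp M (filt M T F0 k) f"

definition L2norm :: "'a measure \<Rightarrow> ('a \<Rightarrow> real) \<Rightarrow> real" where
  "L2norm M f = sqrt (integral\<^sup>L M (\<lambda>x. (f x)^2))"

definition Ym :: "'a measure \<Rightarrow> ('a \<Rightarrow> 'a) \<Rightarrow> 'a measure \<Rightarrow> ('a \<Rightarrow> real) \<Rightarrow> int \<Rightarrow> nat \<Rightarrow> 'a \<Rightarrow> real" where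
  "Ym M T F0 X0 k m = (\<lambda>x. (1 / real m) *
      condE M T F0 k (\<lambda>y. \<Sum>i\<in>{1..m}. Xs M T X0 (k + int i) y) x)"

definition plus_norm :: "'a measure \<Rightarrow> (nat \<Rightarrow> 'a \<Rightarrow> real) \<Rightarrow> ereal" where
  "plus_norm M V = (let L = limsup (\<lambda>n. ereal (integral\<^sup>L M (\<lambda>x. (\<Sum>k<n. V k x)^2) / real n))
     in if L = \<infinity> then \<infinity> else ereal (sqrt (real_of_ereal L)))"

definition acoef :: "'a measure \<Rightarrow> ('a \<Rightarrow> 'a) \<Rightarrow> 'a measure \<Rightarrow> ('a \<Rightarrow> real) \<Rightarrow> nat \<Rightarrow> real" where
  "acoef M T F0 X0 k = L2norm M (condE M T F0 0 (Ssum M T X0 k)) / real k powr (3/2)"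

end

theory Submission
  imports Defs
begin


definition sqi :: "'a measure \<Rightarrow> ('a \<Rightarrow> real) \<Rightarrow> bool" where
  "sqi M f \<longleftrightarrow> f \<in> borel_measurable M \<and> integrable M (\<lambda>x. (f x)^2)"

lemma sqiD[measurable_dest]: "sqi M f \<Longrightarrow> f \<in> borel_measurable M"
  by (simp add: sqi_def)

lemma sqiD2: "sqi M f \<Longrightarrow> integrable M (\<lambda>x. (f x)^2)"
  by (simp add: sqi_def)

lemma sqi_mult_int:
  assumes "sqi M f" "sqi M g"
  shows "integrable M (\<lambda>x. f x * g x)"
proof (rule Bochner_Integration.integrable_bound[of _ "\<lambda>x. (f x)^2 + (g x)^2"])
  show "integrable M (\<lambda>x. (f x)\<^sup>2 + (g x)\<^sup>2)" using assms by (auto simp: sqi_def)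
  show "(\<lambda>x. f x * g x) \<in> borel_measurable M" using assms by (auto simp: sqi_def)
  have "\<And>a b::real. \<bar>a*b\<bar> \<le> a^2 + b^2"
  proof -
    fix a b :: real
    have "2 * (\<bar>a\<bar> * \<bar>b\<bar>) \<le> \<bar>a\<bar>^2 + \<bar>b\<bar>^2"
      using sum_squares_bound[of "\<bar>a\<bar>" "\<bar>b\<bar>"] by (simp add: mult.assoc)
    moreover have "\<bar>a\<bar> * \<bar>b\<bar> \<ge> 0" by simp
    moreover have "\<bar>a*b\<bar> = \<bar>a\<bar> * \<bar>b\<bar>" by (simp add: abs_mult)
    ultimately show "\<bar>a*b\<bar> \<le> a^2 + b^2" by simp
  qed
  then show "AE x in M. norm (f x * g x) \<le> norm ((f x)\<^sup>2 + (g x)\<^sup>2)" by auto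
qed

lemma sqi_bound:
  assumes "sqi M g" "f \<in> borel_measurable M" "AE x in M. \<bar>f x\<bar> \<le> \<bar>g x\<bar>"
  shows "sqi M f"
  unfolding sqi_def
proof (intro conjI)
  show "integrable M (\<lambda>x. (f x)\<^sup>2)"
  proof (rule Bochner_Integration.integrable_bound[of _ "\<lambda>x. (g x)^2"])
    show "integrable M (\<lambda>x. (g x)\<^sup>2)" using assms by (auto simp: sqi_def)
    show "AE x in M. norm ((f x)\<^sup>2) \<le> norm ((g x)\<^sup>2)" using assms(3)
      by eventually_elim (simp add: abs_le_square_iff)
  qed (use assms in auto)
qed (use assms in auto)

lemma sqi_add[intro]:
  assumes "sqi M f" "sqi M g" shows "sqi M (\<lambda>x. f x + g x)"
proof -
  have "integrable M (\<lambda>x. (f x)^2 + 2 * (f x * g x) + (g x)^2)"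
    using assms sqi_mult_int[OF assms] by (auto simp: sqi_def)
  then have "integrable M (\<lambda>x. (f x + g x)^2)" by (simp add: power2_sum algebra_simps)
  moreover have "(\<lambda>x. f x + g x) \<in> borel_measurable M" using assms by (auto simp: sqi_def)
  ultimately show ?thesis by (simp add: sqi_def)
qed

lemma sqi_cmult[intro]:
  assumes "sqi M f" shows "sqi M (\<lambda>x. c * f x)"
  using assms by (auto simp: sqi_def power_mult_distrib)

lemma sqi_uminus[intro]:
  assumes "sqi M f" shows "sqi M (\<lambda>x. - f x)"
  using assms by (auto simp: sqi_def)

lemma sqi_diff[intro]:
  assumes "sqi M f" "sqi M g" shows "sqi M (\<lambda>x. f x - g x)"
  using sqi_add[OF assms(1) sqi_uminus[OF assms(2)]] by simp

lemma sqi_zero[intro]: "sqi M (\<lambda>x. 0)"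
  by (simp add: sqi_def)

lemma sqi_sum[intro]:
  assumes "\<And>i. i \<in> I \<Longrightarrow> sqi M (f i)" shows "sqi M (\<lambda>x. \<Sum>i\<in>I. f i x)"
  using assms
proof (induction I rule: infinite_finite_induct)
  case (insert a F)
  then show ?case by (simp add: sqi_add)
qed auto

lemma sqi_abs[intro]: "sqi M f \<Longrightarrow> sqi M (\<lambda>x. \<bar>f x\<bar>)"
  by (rule sqi_bound, auto)

lemma sqi_cong_AE:
  assumes "sqi M f" "g \<in> borel_measurable M" "AE x in M. f x = g x"
  shows "sqi M g"
  using assms by (intro sqi_bound[OF assms(1)]) auto

lemma (in finite_measure) sqi_integrable: "sqi M f \<Longrightarrow> integrable M f"
  by (rule square_integrable_imp_integrable) (auto simp: sqi_def)

lemma L2norm_nonneg[simp]: "L2norm M f \<ge> 0"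
  by (simp add: L2norm_def)

lemma L2norm_sq: "(L2norm M f)^2 = integral\<^sup>L M (\<lambda>x. (f x)^2)"
  by (simp add: L2norm_def)

lemma L2norm_cong_AE:
  assumes "AE x in M. f x = g x" "f \<in> borel_measurable M" "g \<in> borel_measurable M"
  shows "L2norm M f = L2norm M g"
proof -
  have "integral\<^sup>L M (\<lambda>x. (f x)^2) = integral\<^sup>L M (\<lambda>x. (g x)^2)"
    by (rule integral_cong_AE) (use assms in auto)
  then show ?thesis by (simp add: L2norm_def)
qed

lemma L2norm_cmult: "L2norm M (\<lambda>x. c * f x) = \<bar>c\<bar> * L2norm M f"
  by (simp add: L2norm_def power_mult_distrib real_sqrt_mult)

lemma L2norm_uminus: "L2norm M (\<lambda>x. - f x) = L2norm M f"
  by (simp add: L2norm_def)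

lemma discr_aux:
  fixes A B C :: real
  assumes "\<And>t. 0 \<le> A + 2 * t * B + t^2 * C" "C \<ge> 0"
  shows "B^2 \<le> A * C"
proof (cases "C = 0")
  case True
  have "B = 0"
  proof (rule ccontr)
    assume "B \<noteq> 0"
    define t where "t = -(\<bar>A\<bar>+1)/B/2"
    have "0 \<le> A + 2 * t * B" using assms(1)[of t] True by simp
    moreover have "2 * t * B = -(\<bar>A\<bar>+1)" using \<open>B \<noteq> 0\<close> by (simp add: t_def field_simps)
    ultimately show False by linarith
  qed
  then show ?thesis using True by simp
next
  case False
  then have "C > 0" using assms(2) by simp
  have "0 \<le> A + 2 * (-B/C) * B + (-B/C)^2 * C" by (rule assms(1))
  also have "\<dots> = A - B^2 / C" using \<open>C > 0\<close> by (simp add: field_simps power2_eq_square)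
  finally show ?thesis using \<open>C > 0\<close> by (simp add: field_simps)
qed

lemma L2_CS:
  assumes "sqi M f" "sqi M g"
  shows "\<bar>integral\<^sup>L M (\<lambda>x. f x * g x)\<bar> \<le> L2norm M f * L2norm M g"
proof -
  let ?A = "integral\<^sup>L M (\<lambda>x. (f x)^2)" and ?B = "integral\<^sup>L M (\<lambda>x. f x * g x)"
    and ?C = "integral\<^sup>L M (\<lambda>x. (g x)^2)"
  have iA: "integrable M (\<lambda>x. (f x)^2)" and iC: "integrable M (\<lambda>x. (g x)^2)"
    using assms by (auto simp: sqi_def)
  have iB: "integrable M (\<lambda>x. f x * g x)" by (rule sqi_mult_int[OF assms])
  have "0 \<le> ?A + 2 * t * ?B + t^2 * ?C" for t
  proof -
    have "0 \<le> integral\<^sup>L M (\<lambda>x. (f x + t * g x)^2)" by simp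
    also have "\<dots> = integral\<^sup>L M (\<lambda>x. (f x)^2 + (2 * t) * (f x * g x) + t^2 * (g x)^2)"
      by (simp add: power2_sum power_mult_distrib algebra_simps)
    also have "\<dots> = ?A + 2 * t * ?B + t^2 * ?C"
      using iA iB iC by simp
    finally show ?thesis .
  qed
  moreover have "?C \<ge> 0" by simp
  ultimately have "?B^2 \<le> ?A * ?C" by (rule discr_aux)
  then have "\<bar>?B\<bar> \<le> sqrt (?A * ?C)" by (intro real_le_rsqrt) simp
  then show ?thesis by (simp add: L2norm_def real_sqrt_mult)
qed

lemma L2_triangle:
  assumes "sqi M f" "sqi M g"
  shows "L2norm M (\<lambda>x. f x + g x) \<le> L2norm M f + L2norm M g"
proof -
  have iA: "integrable M (\<lambda>x. (f x)^2)" and iC: "integrable M (\<lambda>x. (g x)^2)"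
    using assms by (auto simp: sqi_def)
  have iB: "integrable M (\<lambda>x. f x * g x)" by (rule sqi_mult_int[OF assms])
  have "(L2norm M (\<lambda>x. f x + g x))^2 = integral\<^sup>L M (\<lambda>x. (f x)^2 + 2 * (f x * g x) + (g x)^2)"
    by (simp add: L2norm_sq power2_sum algebra_simps)
  also have "\<dots> = (L2norm M f)^2 + 2 * integral\<^sup>L M (\<lambda>x. f x * g x) + (L2norm M g)^2"
    using iA iB iC by (simp add: L2norm_sq)
  also have "\<dots> \<le> (L2norm M f)^2 + 2 * (L2norm M f * L2norm M g) + (L2norm M g)^2"
    using L2_CS[OF assms] by simp
  also have "\<dots> = (L2norm M f + L2norm M g)^2" by (simp add: power2_sum)
  finally show ?thesis
    by (meson L2norm_nonneg add_nonneg_nonneg power2_le_imp_le)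
qed

lemma L2_triangle_diff:
  assumes "sqi M f" "sqi M g"
  shows "L2norm M (\<lambda>x. f x - g x) \<le> L2norm M f + L2norm M g"
  using L2_triangle[OF assms(1) sqi_uminus[OF assms(2)]] by (simp add: L2norm_uminus)

lemma L2_sum:
  assumes "\<And>i. i \<in> I \<Longrightarrow> sqi M (f i)"
  shows "L2norm M (\<lambda>x. \<Sum>i\<in>I. f i x) \<le> (\<Sum>i\<in>I. L2norm M (f i))"
  using assms
proof (induction I rule: infinite_finite_induct)
  case (insert a F)
  have "L2norm M (\<lambda>x. \<Sum>i\<in>insert a F. f i x) = L2norm M (\<lambda>x. f a x + (\<Sum>i\<in>F. f i x))"
    using insert by simp
  also have "\<dots> \<le> L2norm M (f a) + L2norm M (\<lambda>x. \<Sum>i\<in>F. f i x)"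
    using insert by (intro L2_triangle) auto
  also have "\<dots> \<le> L2norm M (f a) + (\<Sum>i\<in>F. L2norm M (f i))"
    using insert by auto
  finally show ?case using insert by simp
qed (auto simp: L2norm_def)

lemma L2_mono:
  assumes "sqi M g" "f \<in> borel_measurable M" "AE x in M. \<bar>f x\<bar> \<le> \<bar>g x\<bar>"
  shows "L2norm M f \<le> L2norm M g"
proof -
  have "sqi M f" by (rule sqi_bound[OF assms])
  have "integral\<^sup>L M (\<lambda>x. (f x)^2) \<le> integral\<^sup>L M (\<lambda>x. (g x)^2)"
    apply (rule integral_mono_AE)
    using \<open>sqi M f\<close> assms by (auto simp: sqi_def abs_le_square_iff elim!: eventually_mono)
  then show ?thesis by (simp add: L2norm_def)
qed

lemma L2_sqrt_sumsq:
  assumes "finite I" "\<And>i. i \<in> I \<Longrightarrow> sqi M (f i)"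
  shows "L2norm M (\<lambda>x. sqrt (\<Sum>i\<in>I. (f i x)^2)) = sqrt (\<Sum>i\<in>I. (L2norm M (f i))^2)"
proof -
  have "integral\<^sup>L M (\<lambda>x. (sqrt (\<Sum>i\<in>I. (f i x)^2))^2) = integral\<^sup>L M (\<lambda>x. \<Sum>i\<in>I. (f i x)^2)"
    by (simp add: sum_nonneg)
  also have "\<dots> = (\<Sum>i\<in>I. integral\<^sup>L M (\<lambda>x. (f i x)^2))"
    using assms by (intro Bochner_Integration.integral_sum) (auto simp: sqi_def)
  finally show ?thesis by (simp add: L2norm_def)
qed


locale stat =
  fixes M :: "'a measure" and T :: "'a \<Rightarrow> 'a" and F0 :: "'a measure"
  assumes PS: "prob_space M"
    and Tm: "T \<in> M \<rightarrow>\<^sub>M M"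
    and Tpres: "distr M M T = M"
    and sub: "subalgebra M F0"
    and nest: "sets F0 \<subseteq> sets (vimage_algebra (space M) T F0)"
begin
end

sublocale stat \<subseteq> prob_space M by (rule PS)

context stat
begin

definition Fk :: "nat \<Rightarrow> 'a measure" where
  "Fk k = vimage_algebra (space M) (T ^^ k) F0"

definition E :: "nat \<Rightarrow> ('a \<Rightarrow> real) \<Rightarrow> 'a \<Rightarrow> real" where
  "E k f = real_cond_exp M (Fk k) f"

lemma Tk_meas: "T ^^ k \<in> M \<rightarrow>\<^sub>M M"
proof (induction k)
  case (Suc k)
  have "T \<circ> T ^^ k \<in> M \<rightarrow>\<^sub>M M" by (rule measurable_comp[OF Suc Tm])
  then show ?case by (simp only: funpow.simps)
next
  case 0
  show ?case unfolding funpow.simps(1) by (rule measurable_ident)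
qed

lemma Tk_space: "x \<in> space M \<Longrightarrow> (T ^^ k) x \<in> space M"
  by (rule measurable_space[OF Tk_meas])

lemma Tk_pres: "distr M M (T ^^ k) = M"
proof (induction k)
  case 0 then show ?case by (simp add: distr_id2)
next
  case (Suc k)
  have "distr M M (T ^^ Suc k) = distr M M ((T ^^ k) \<circ> T)"
    by (simp only: funpow_Suc_right)
  also have "\<dots> = distr (distr M M T) M (T ^^ k)"
    by (rule distr_distr[OF Tk_meas Tm, symmetric])
  also have "\<dots> = M" using Suc Tpres by simp
  finally show ?case .
qed

lemma integral_Tk:
  fixes f :: "'a \<Rightarrow> real"
  assumes "f \<in> borel_measurable M"
  shows "integral\<^sup>L M (\<lambda>x. f ((T ^^ k) x)) = integral\<^sup>L M f"
  using integral_distr[OF Tk_meas[of k] assms] Tk_pres[of k] by simp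

lemma integrable_Tk:
  fixes f :: "'a \<Rightarrow> real"
  assumes "integrable M f"
  shows "integrable M (\<lambda>x. f ((T ^^ k) x))"
proof -
  have fm: "f \<in> borel_measurable M" using assms by auto
  have "integrable (distr M M (T ^^ k)) f" by (subst Tk_pres) (rule assms)
  then show ?thesis using integrable_distr_eq[OF Tk_meas[of k] fm] by simp
qed

lemma AE_Tk:
  assumes "AE x in M. P x"
  shows "AE x in M. P ((T ^^ k) x)"
proof -
  have "AE x in distr M M (T ^^ k). P x" by (subst Tk_pres) (rule assms)
  then show ?thesis by (rule AE_distrD[OF Tk_meas])
qed

lemma sqi_Tk:
  assumes "sqi M f"
  shows "sqi M (\<lambda>x. f ((T ^^ k) x))"
proof -
  have "integrable M (\<lambda>x. (f ((T ^^ k) x))^2)"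
    using integrable_Tk[of "\<lambda>x. (f x)^2" k] assms by (simp add: sqi_def)
  moreover have "(\<lambda>x. f ((T ^^ k) x)) \<in> borel_measurable M"
    using measurable_compose[OF Tk_meas[of k], of f borel] assms by (simp add: sqi_def)
  ultimately show ?thesis by (simp add: sqi_def)
qed

lemma L2norm_Tk:
  assumes "f \<in> borel_measurable M"
  shows "L2norm M (\<lambda>x. f ((T ^^ k) x)) = L2norm M f"
  using integral_Tk[of "\<lambda>x. (f x)^2" k] assms by (simp add: L2norm_def)

lemma F0_sets_M: "sets F0 \<subseteq> sets M" using sub by (simp add: subalgebra_def)
lemma F0_space: "space F0 = space M" using sub by (simp add: subalgebra_def)

lemma Tk_Pi: "T ^^ k \<in> space M \<rightarrow> space F0"
  using Tk_space F0_space by auto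

lemma sets_Fk: "sets (Fk k) = {(T ^^ k) -` A \<inter> space M | A. A \<in> sets F0}"
  unfolding Fk_def by (rule sets_vimage_algebra2[OF Tk_Pi])

lemma space_Fk[simp]: "space (Fk k) = space M"
  by (simp add: Fk_def)

lemma subalg_Fk: "subalgebra M (Fk k)"
  unfolding subalgebra_def
proof
  show "sets (Fk k) \<subseteq> sets M"
  proof
    fix A assume "A \<in> sets (Fk k)"
    then obtain B where B: "B \<in> sets F0" "A = (T ^^ k) -` B \<inter> space M"
      by (auto simp: sets_Fk)
    then have "B \<in> sets M" using F0_sets_M by auto
    then show "A \<in> sets M" using B measurable_sets[OF Tk_meas] by auto
  qed
qed simp

lemma sets_Fk0: "sets (Fk 0) = sets F0"
proof -
  have "sets (Fk 0) = {A \<inter> space M | A. A \<in> sets F0}" by (simp add: sets_Fk)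
  also have "\<dots> = sets F0"
  proof (safe)
    fix A assume "A \<in> sets F0"
    then show "A \<inter> space M \<in> sets F0" using sets.sets_into_space F0_space
      by (metis inf.absorb1)
  next
    fix A assume "A \<in> sets F0"
    then show "\<exists>B. A = B \<inter> space M \<and> B \<in> sets F0" using sets.sets_into_space F0_space
      by (metis inf.absorb1)
  qed
  finally show ?thesis .
qed

lemma meas_Fk0_iff: "(f :: 'a \<Rightarrow> real) \<in> borel_measurable (Fk 0) \<longleftrightarrow> f \<in> borel_measurable F0"
proof -
  have "(borel_measurable (Fk 0) :: ('a \<Rightarrow> real) set) = borel_measurable F0" by (rule measurable_cong_sets[OF sets_Fk0 refl])
  then show ?thesis by (simp only:)
qed

lemma Fk_Suc: "sets (Fk k) \<subseteq> sets (Fk (Suc k))"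
proof
  fix A assume "A \<in> sets (Fk k)"
  then obtain B where B: "B \<in> sets F0" "A = (T ^^ k) -` B \<inter> space M"
    by (auto simp: sets_Fk)
  have TP: "T \<in> space M \<rightarrow> space F0" using measurable_space[OF Tm] F0_space by auto
  have "B \<in> sets (vimage_algebra (space M) T F0)" using B nest by blast
  then have "B \<in> {T -` A \<inter> space M | A. A \<in> sets F0}" using sets_vimage_algebra2[OF TP] by blast
  then obtain C where C: "C \<in> sets F0" "B = T -` C \<inter> space M" by blast
  have "A = (T ^^ Suc k) -` C \<inter> space M"
  proof (intro set_eqI iffI)
    fix x assume "x \<in> A"
    then show "x \<in> (T ^^ Suc k) -` C \<inter> space M" using B C by simp
  next
    fix x assume x: "x \<in> (T ^^ Suc k) -` C \<inter> space M"
    then have "(T ^^ k) x \<in> space M" using Tk_space by blast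
    then show "x \<in> A" using x B C by simp
  qed
  then show "A \<in> sets (Fk (Suc k))" using C by (auto simp: sets_Fk)
qed

lemma Fk_mono: "i \<le> j \<Longrightarrow> sets (Fk i) \<subseteq> sets (Fk j)"
proof (induction j)
  case (Suc j)
  then show ?case using Fk_Suc by (metis le_Suc_eq order_trans order_refl)
qed simp

lemma subalg_Fk_Fk: "i \<le> j \<Longrightarrow> subalgebra (Fk j) (Fk i)"
  using Fk_mono[of i j] by (simp add: subalgebra_def)

lemma meas_Fk_mono: "i \<le> j \<Longrightarrow> f \<in> borel_measurable (Fk i) \<Longrightarrow> f \<in> borel_measurable (Fk j)"
  by (rule measurable_from_subalg[OF subalg_Fk_Fk])

lemma meas_Fk_M: "f \<in> borel_measurable (Fk i) \<Longrightarrow> f \<in> borel_measurable M"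
  by (rule measurable_from_subalg[OF subalg_Fk])

lemma meas_shift:
  assumes "f \<in> borel_measurable (Fk j)"
  shows "(\<lambda>x. f ((T ^^ k) x)) \<in> borel_measurable (Fk (j + k))"
proof -
  have P: "T ^^ k \<in> space M \<rightarrow> space (Fk j)" using Tk_space by simp
  have h1: "T ^^ k \<in> measurable (vimage_algebra (space M) (T ^^ k) (Fk j)) (Fk j)"
    by (rule measurable_vimage_algebra1[OF P])
  have h2: "(\<lambda>x. f ((T ^^ k) x)) \<in> borel_measurable (vimage_algebra (space M) (T ^^ k) (Fk j))"
    by (rule measurable_compose[OF h1 assms])
  have P2: "T ^^ k \<in> space M \<rightarrow> space M" using Tk_space by simp
  have P3: "T ^^ j \<in> space M \<rightarrow> space F0" by (rule Tk_Pi)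
  have "vimage_algebra (space M) (T ^^ k) (Fk j) = vimage_algebra (space M) (\<lambda>x. (T ^^ j) ((T ^^ k) x)) F0"
    unfolding Fk_def by (rule vimage_algebra_vimage_algebra_eq[OF P2 P3])
  also have "(\<lambda>x. (T ^^ j) ((T ^^ k) x)) = T ^^ (j + k)"
    by (simp only: funpow_add comp_def)
  finally have "vimage_algebra (space M) (T ^^ k) (Fk j) = Fk (j + k)" by (simp only: Fk_def)
  then show ?thesis using h2 by simp
qed

lemma sfs: "sigma_finite_subalgebra M (Fk k)"
proof -
  have fm: "finite_measure M" using PS by (simp add: prob_space_def)
  have "finite_measure_subalgebra M (Fk k)"
    by (rule finite_measure_subalgebra.intro[OF fm]) (simp add: finite_measure_subalgebra_axioms_def subalg_Fk)
  then show ?thesis by (rule finite_measure_subalgebra_is_sigma_finite)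
qed

lemma E_meas[measurable]: "E k f \<in> borel_measurable (Fk k)"
  by (simp add: E_def)

lemma E_measM[measurable]: "E k f \<in> borel_measurable M"
  by (simp add: E_def)

lemma E_int: "integrable M f \<Longrightarrow> integrable M (E k f)"
  unfolding E_def by (rule sigma_finite_subalgebra.real_cond_exp_int(1)[OF sfs])

lemma E_integral: "integrable M f \<Longrightarrow> integral\<^sup>L M (E k f) = integral\<^sup>L M f"
  unfolding E_def by (rule sigma_finite_subalgebra.real_cond_exp_int(2)[OF sfs])

lemma E_self: "integrable M f \<Longrightarrow> f \<in> borel_measurable (Fk k) \<Longrightarrow> AE x in M. E k f x = f x"
  unfolding E_def by (rule sigma_finite_subalgebra.real_cond_exp_F_meas[OF sfs])

lemma E_tower:
  assumes "i \<le> j" "integrable M f"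
  shows "AE x in M. E i (E j f) x = E i f x"
  unfolding E_def
  apply (rule sigma_finite_subalgebra.real_cond_exp_nested_subalg[OF sfs subalg_Fk _ assms(2)])
  using Fk_mono[OF assms(1)] by (simp add: subalgebra_def)

lemma E_add:
  assumes "integrable M f" "integrable M g"
  shows "AE x in M. E k (\<lambda>x. f x + g x) x = E k f x + E k g x"
  unfolding E_def by (rule sigma_finite_subalgebra.real_cond_exp_add[OF sfs assms])

lemma E_diff:
  assumes "integrable M f" "integrable M g"
  shows "AE x in M. E k (\<lambda>x. f x - g x) x = E k f x - E k g x"
  unfolding E_def by (rule sigma_finite_subalgebra.real_cond_exp_diff[OF sfs assms])

lemma E_cmult:
  assumes "integrable M f"
  shows "AE x in M. E k (\<lambda>x. c * f x) x = c * E k f x"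
  unfolding E_def by (rule sigma_finite_subalgebra.real_cond_exp_cmult[OF sfs assms])

lemma E_sum:
  assumes "\<And>i. integrable M (f i)"
  shows "AE x in M. E k (\<lambda>x. \<Sum>i\<in>I. f i x) x = (\<Sum>i\<in>I. E k (f i) x)"
  unfolding E_def by (rule sigma_finite_subalgebra.real_cond_exp_sum[OF sfs assms])

lemma E_intg:
  assumes "integrable M (\<lambda>x. f x * g x)" "f \<in> borel_measurable (Fk k)" "g \<in> borel_measurable M"
  shows "integral\<^sup>L M (\<lambda>x. f x * E k g x) = integral\<^sup>L M (\<lambda>x. f x * g x)"
  unfolding E_def by (rule sigma_finite_subalgebra.real_cond_exp_intg(2)[OF sfs assms])

lemma E_cong:
  assumes "AE x in M. f x = g x" "f \<in> borel_measurable M" "g \<in> borel_measurable M"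
  shows "AE x in M. E k f x = E k g x"
  unfolding E_def by (rule sigma_finite_subalgebra.real_cond_exp_cong[OF sfs assms])

lemma E_zero: "AE x in M. E k (\<lambda>x. 0) x = 0"
  using E_self[of "\<lambda>x. 0" k] by simp

lemma E_sqi:
  assumes "sqi M f"
  shows "sqi M (E k f)" "L2norm M (E k f) \<le> L2norm M f"
proof -
  have fi: "integrable M f" using assms by (rule sqi_integrable)
  have q: "integrable M (\<lambda>x. (f x)^2)" using assms by (simp add: sqi_def)
  have I: "integrable M (\<lambda>x. (E k f x)^2)"
    unfolding E_def
    by (rule sigma_finite_subalgebra.integrable_convex_cond_exp[OF sfs fi, of UNIV, where q = power2])
      (use q convex_power2 in auto)
  then show "sqi M (E k f)" by (simp add: sqi_def)
  have J: "AE x in M. (E k f x)^2 \<le> E k (\<lambda>x. (f x)^2) x"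
    unfolding E_def
    by (rule sigma_finite_subalgebra.real_cond_exp_jensens_inequality(2)[OF sfs fi, of UNIV, where q = power2])
      (use q convex_power2 in auto)
  have "integral\<^sup>L M (\<lambda>x. (E k f x)^2) \<le> integral\<^sup>L M (E k (\<lambda>x. (f x)^2))"
    by (rule integral_mono_AE[OF I E_int[OF q] J])
  also have "\<dots> = integral\<^sup>L M (\<lambda>x. (f x)^2)" by (rule E_integral[OF q])
  finally show "L2norm M (E k f) \<le> L2norm M f" by (simp add: L2norm_def)
qed

lemma E_shift:
  assumes "integrable M f"
  shows "AE x in M. E k (\<lambda>y. f ((T ^^ k) y)) x = E 0 f ((T ^^ k) x)"
  unfolding E_def
proof (rule sigma_finite_subalgebra.real_cond_exp_charact[OF sfs])
  show "integrable M (\<lambda>y. f ((T ^^ k) y))" by (rule integrable_Tk[OF assms])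
  show "integrable M (\<lambda>x. real_cond_exp M (Fk 0) f ((T ^^ k) x))"
    by (rule integrable_Tk[OF E_int[OF assms, unfolded E_def]])
  show "(\<lambda>x. real_cond_exp M (Fk 0) f ((T ^^ k) x)) \<in> borel_measurable (Fk k)"
    using meas_shift[of "real_cond_exp M (Fk 0) f" 0 k] by simp
  fix A assume "A \<in> sets (Fk k)"
  then obtain B where B: "B \<in> sets F0" "A = (T ^^ k) -` B \<inter> space M"
    by (auto simp: sets_Fk)
  have BM: "B \<in> sets M" using B F0_sets_M by auto
  have B0: "B \<in> sets (Fk 0)" using B sets_Fk0 by auto
  have ind: "\<And>x. x \<in> space M \<Longrightarrow> indicator A x = (indicator B ((T ^^ k) x) :: real)"
    using B by (auto simp: indicator_def)
  have fm: "f \<in> borel_measurable M" using assms by auto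
  have "(\<integral>x\<in>A. f ((T ^^ k) x) \<partial>M) = (\<integral>x. indicator B ((T ^^ k) x) * f ((T ^^ k) x) \<partial>M)"
    unfolding set_lebesgue_integral_def by (intro Bochner_Integration.integral_cong) (auto simp: ind)
  also have "\<dots> = (\<integral>x. indicator B x * f x \<partial>M)"
    by (rule integral_Tk[of "\<lambda>x. indicator B x * f x"]) (use BM fm in auto)
  also have "\<dots> = (\<integral>x\<in>B. real_cond_exp M (Fk 0) f x \<partial>M)"
    using sigma_finite_subalgebra.real_cond_exp_intA[OF sfs assms B0]
    by (simp add: set_lebesgue_integral_def)
  also have "\<dots> = (\<integral>x. indicator B x * real_cond_exp M (Fk 0) f x \<partial>M)"
    by (simp add: set_lebesgue_integral_def)
  also have "\<dots> = (\<integral>x. indicator B ((T ^^ k) x) * real_cond_exp M (Fk 0) f ((T ^^ k) x) \<partial>M)"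
    by (rule integral_Tk[symmetric, of "\<lambda>x. indicator B x * real_cond_exp M (Fk 0) f x"]) (use BM in auto)
  also have "\<dots> = (\<integral>x\<in>A. real_cond_exp M (Fk 0) f ((T ^^ k) x) \<partial>M)"
    unfolding set_lebesgue_integral_def by (intro Bochner_Integration.integral_cong) (auto simp: ind)
  finally show "(\<integral>x\<in>A. f ((T ^^ k) x) \<partial>M) = (\<integral>x\<in>A. real_cond_exp M (Fk 0) f ((T ^^ k) x) \<partial>M)" .
qed

end


lemma Max_atMost_Suc:
  fixes f :: "nat \<Rightarrow> real"
  shows "Max (f ` {..Suc n}) = max (Max (f ` {..n})) (f (Suc n))"
proof -
  have "f ` {..Suc n} = insert (f (Suc n)) (f ` {..n})" by (simp add: atMost_Suc)
  then show ?thesis by (simp add: max.commute)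
qed

lemma Max_atMost_ge: "(i::nat) \<le> n \<Longrightarrow> (f i :: real) \<le> Max (f ` {..n})"
proof -
  assume "i \<le> n"
  then have "f i \<in> f ` {..n}" by simp
  then show ?thesis by (intro Max_ge) auto
qed

lemma pathwise_aux:
  fixes x :: "nat \<Rightarrow> real"
  defines "b \<equiv> \<lambda>s. Max (x ` {..s})"
  shows "(\<Sum>s<n. b s * (x (Suc s) - x s)) \<le> b n * x n - (b n)^2 / 2"
proof (induction n)
  case 0
  have "b 0 = x 0" by (simp add: b_def)
  then show ?case by (simp add: power2_eq_square)
next
  case (Suc n)
  have bS: "b (Suc n) = max (b n) (x (Suc n))" by (simp add: b_def Max_atMost_Suc)
  have "(\<Sum>s<Suc n. b s * (x (Suc s) - x s)) = (\<Sum>s<n. b s * (x (Suc s) - x s)) + b n * (x (Suc n) - x n)"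
    by simp
  also have "\<dots> \<le> b n * x n - (b n)^2 / 2 + b n * (x (Suc n) - x n)" using Suc by simp
  also have "\<dots> = b n * x (Suc n) - (b n)^2/2" by (simp add: algebra_simps)
  also have "\<dots> \<le> b (Suc n) * x (Suc n) - (b (Suc n))^2 / 2"
  proof (cases "x (Suc n) \<le> b n")
    case True then show ?thesis using bS by simp
  next
    case False
    then have "b (Suc n) = x (Suc n)" using bS by simp
    moreover have "0 \<le> (x (Suc n) - b n)^2" by simp
    ultimately show ?thesis by (simp add: power2_eq_square algebra_simps)
  qed
  finally show ?case .
qed

lemma pathwise:
  fixes x :: "nat \<Rightarrow> real"
  defines "b \<equiv> \<lambda>s. Max (x ` {..s})"
  shows "(b n)^2 \<le> 4 * (x n)^2 - 4 * (\<Sum>s<n. b s * (x (Suc s) - x s))"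
proof -
  have "(\<Sum>s<n. b s * (x (Suc s) - x s)) \<le> b n * x n - (b n)^2 / 2"
    unfolding b_def by (rule pathwise_aux)
  moreover have "0 \<le> (2 * x n - b n)^2" by simp
  ultimately show ?thesis by (simp add: power2_eq_square algebra_simps)
qed

lemma abs_step: "sgn (a::real) * d \<le> \<bar>a + d\<bar> - \<bar>a\<bar>"
  by (cases a "0::real" rule: linorder_cases) (auto simp: sgn_if)

lemma doob_pathwise:
  fixes D :: "nat \<Rightarrow> real"
  defines "S \<equiv> \<lambda>j. \<Sum>i<j. D i"
  defines "b \<equiv> \<lambda>s. Max ((\<lambda>j. \<bar>S j\<bar>) ` {..s})"
  shows "(b n)^2 \<le> 4 * (S n)^2 - 4 * (\<Sum>s<n. (b s * sgn (S s)) * D s)"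
proof -
  have "(b n)^2 \<le> 4 * (\<bar>S n\<bar>)^2 - 4 * (\<Sum>s<n. b s * (\<bar>S (Suc s)\<bar> - \<bar>S s\<bar>))"
    unfolding b_def by (rule pathwise)
  moreover have "(\<Sum>s<n. (b s * sgn (S s)) * D s) \<le> (\<Sum>s<n. b s * (\<bar>S (Suc s)\<bar> - \<bar>S s\<bar>))"
  proof (rule sum_mono)
    fix s assume "s \<in> {..<n}"
    have b0: "b s \<ge> 0" unfolding b_def by (rule order_trans[OF abs_ge_zero Max_atMost_ge[of s s]]) simp
    have "S (Suc s) = S s + D s" by (simp add: S_def)
    then have "sgn (S s) * D s \<le> \<bar>S (Suc s)\<bar> - \<bar>S s\<bar>" using abs_step by simp
    then show "(b s * sgn (S s)) * D s \<le> b s * (\<bar>S (Suc s)\<bar> - \<bar>S s\<bar>)"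
      using mult_left_mono[OF _ b0] by (simp add: mult.assoc)
  qed
  ultimately show ?thesis by simp
qed

lemma doob_L2:
  fixes D :: "nat \<Rightarrow> 'a \<Rightarrow> real" and G :: "nat \<Rightarrow> 'a measure"
  assumes sq: "\<And>i. sqi M (D i)"
    and Gsub: "\<And>i. subalgebra M (G i)"
    and Dmeas: "\<And>i j. j < i \<Longrightarrow> D j \<in> borel_measurable (G i)"
    and orth: "\<And>i h. h \<in> borel_measurable (G i) \<Longrightarrow> sqi M h \<Longrightarrow> integral\<^sup>L M (\<lambda>x. h x * D i x) = 0"
  shows "integral\<^sup>L M (\<lambda>x. (Max ((\<lambda>j. \<bar>\<Sum>i<j. D i x\<bar>) ` {..n}))^2)
          \<le> 4 * integral\<^sup>L M (\<lambda>x. (\<Sum>i<n. D i x)^2)"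
    and "sqi M (\<lambda>x. Max ((\<lambda>j. \<bar>\<Sum>i<j. D i x\<bar>) ` {..n}))"
proof -
  define S where "S = (\<lambda>j x. \<Sum>i<j. D i x)"
  define b where "b = (\<lambda>s x. Max ((\<lambda>j. \<bar>S j x\<bar>) ` {..s}))"
  have Ssq: "sqi M (S j)" for j unfolding S_def using sq by auto
  have SG: "S j \<in> borel_measurable (G s)" if "j \<le> s" for j s
    unfolding S_def using Dmeas that by (intro borel_measurable_sum) auto
  have bG: "b s \<in> borel_measurable (G s)" for s
    unfolding b_def by (intro borel_measurable_Max borel_measurable_abs SG) auto
  have bM: "b s \<in> borel_measurable M" for s by (rule measurable_from_subalg[OF Gsub bG])
  have bsq: "sqi M (b s)" for s
  proof (rule sqi_bound[of _ "\<lambda>x. \<Sum>j\<le>s. \<bar>S j x\<bar>"])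
    show "sqi M (\<lambda>x. \<Sum>j\<le>s. \<bar>S j x\<bar>)" using Ssq by (intro sqi_sum sqi_abs)
    show "b s \<in> borel_measurable M" by (rule bM)
    show "AE x in M. \<bar>b s x\<bar> \<le> \<bar>\<Sum>j\<le>s. \<bar>S j x\<bar>\<bar>"
    proof (rule AE_I2)
      fix x
      have "b s x \<ge> 0" unfolding b_def by (rule order_trans[OF abs_ge_zero Max_atMost_ge[of s s]]) simp
      moreover have "b s x \<le> (\<Sum>j\<le>s. \<bar>S j x\<bar>)"
        unfolding b_def by (subst Max_le_iff) (auto intro!: member_le_sum)
      ultimately show "\<bar>b s x\<bar> \<le> \<bar>\<Sum>j\<le>s. \<bar>S j x\<bar>\<bar>" by simp
    qed
  qed
  define h where "h = (\<lambda>s x. b s x * sgn (S s x))"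
  have hG: "h s \<in> borel_measurable (G s)" for s
    unfolding h_def using bG SG by measurable
  have hsq: "sqi M (h s)" for s
  proof (rule sqi_bound[OF bsq[of s]])
    show "h s \<in> borel_measurable M" by (rule measurable_from_subalg[OF Gsub hG])
    show "AE x in M. \<bar>h s x\<bar> \<le> \<bar>b s x\<bar>"
      by (rule AE_I2) (auto simp: h_def abs_mult sgn_if)
  qed
  have hD: "integral\<^sup>L M (\<lambda>x. h s x * D s x) = 0" for s by (rule orth[OF hG hsq])
  have hDi: "integrable M (\<lambda>x. h s x * D s x)" for s by (rule sqi_mult_int[OF hsq sq])
  have pw: "(b n x)^2 \<le> 4 * (S n x)^2 - 4 * (\<Sum>s<n. h s x * D s x)" for x
    unfolding b_def S_def h_def by (rule doob_pathwise)
  have i1: "integrable M (\<lambda>x. (b n x)^2)" using bsq by (simp add: sqi_def)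
  have i2: "integrable M (\<lambda>x. 4 * (S n x)^2 - 4 * (\<Sum>s<n. h s x * D s x))"
    using Ssq hDi by (auto simp: sqi_def)
  have "integral\<^sup>L M (\<lambda>x. (b n x)^2) \<le> integral\<^sup>L M (\<lambda>x. 4 * (S n x)^2 - 4 * (\<Sum>s<n. h s x * D s x))"
    by (rule integral_mono[OF i1 i2 pw])
  also have "\<dots> = 4 * integral\<^sup>L M (\<lambda>x. (S n x)^2) - 4 * (\<Sum>s<n. integral\<^sup>L M (\<lambda>x. h s x * D s x))"
    using Ssq hDi by (simp add: sqi_def)
  also have "\<dots> = 4 * integral\<^sup>L M (\<lambda>x. (S n x)^2)" using hD by simp
  finally show "integral\<^sup>L M (\<lambda>x. (Max ((\<lambda>j. \<bar>\<Sum>i<j. D i x\<bar>) ` {..n}))^2)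
          \<le> 4 * integral\<^sup>L M (\<lambda>x. (\<Sum>i<n. D i x)^2)" by (simp add: b_def S_def)
  show "sqi M (\<lambda>x. Max ((\<lambda>j. \<bar>\<Sum>i<j. D i x\<bar>) ` {..n}))" using bsq[of n] by (simp add: b_def S_def)
qed

lemma orth_sum:
  fixes D :: "nat \<Rightarrow> 'a \<Rightarrow> real" and G :: "nat \<Rightarrow> 'a measure"
  assumes sq: "\<And>i. sqi M (D i)"
    and Dmeas: "\<And>i j. j < i \<Longrightarrow> D j \<in> borel_measurable (G i)"
    and orth: "\<And>i h. h \<in> borel_measurable (G i) \<Longrightarrow> sqi M h \<Longrightarrow> integral\<^sup>L M (\<lambda>x. h x * D i x) = 0"
  shows "integral\<^sup>L M (\<lambda>x. (\<Sum>i<n. D i x)^2) = (\<Sum>i<n. integral\<^sup>L M (\<lambda>x. (D i x)^2))"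
proof (induction n)
  case (Suc n)
  define S where "S = (\<lambda>x. \<Sum>i<n. D i x)"
  have Ssq: "sqi M S" unfolding S_def using sq by auto
  have SG: "S \<in> borel_measurable (G n)"
    unfolding S_def using Dmeas by (intro borel_measurable_sum) auto
  have "integral\<^sup>L M (\<lambda>x. (\<Sum>i<Suc n. D i x)^2) = integral\<^sup>L M (\<lambda>x. (S x)^2 + 2 * (S x * D n x) + (D n x)^2)"
    by (simp add: S_def power2_sum algebra_simps)
  also have "\<dots> = integral\<^sup>L M (\<lambda>x. (S x)^2) + 2 * integral\<^sup>L M (\<lambda>x. S x * D n x) + integral\<^sup>L M (\<lambda>x. (D n x)^2)"
    using Ssq sq[of n] sqi_mult_int[OF Ssq sq[of n]] by (simp add: sqi_def)
  also have "integral\<^sup>L M (\<lambda>x. S x * D n x) = 0" by (rule orth[OF SG Ssq])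
  finally show ?case using Suc by (simp add: S_def)
qed simp


lemma sum_pairs: "(\<Sum>i<2*k. z i) = (\<Sum>i<k. z (2*i) + z (2*i+1)) " for z :: "nat \<Rightarrow> real"
  by (induction k) (auto simp: mult_2)

lemma abs_le_sqrt_sumsq:
  assumes "finite A" "k \<in> A"
  shows "\<bar>a k\<bar> \<le> sqrt (\<Sum>i\<in>A. (a i)^2 :: real)"
proof (rule real_le_rsqrt)
  show "\<bar>a k\<bar>^2 \<le> (\<Sum>i\<in>A. (a i)^2)"
    using member_le_sum[of k A "\<lambda>i. (a i)^2"] assms by simp
qed

lemma max_split:
  fixes z zp :: "nat \<Rightarrow> real"
  assumes N: "N \<ge> 1"
  shows "Max ((\<lambda>j. \<bar>\<Sum>i<j. z i\<bar>) ` {1..2*N})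
     \<le> Max ((\<lambda>k. \<bar>\<Sum>i<k. z (2*i) + z (2*i+1) - zp i\<bar>) ` {..N})
       + Max ((\<lambda>k. \<bar>\<Sum>i<k. zp i\<bar>) ` {1..N})
       + sqrt (\<Sum>i<N. (z (2*i))^2)"
  (is "?L \<le> ?A + ?B + ?C")
proof -
  have Bnn: "0 \<le> ?B"
  proof -
    have "1 \<in> {1..N}" using N by simp
    then have "\<bar>\<Sum>i<1. zp i\<bar> \<le> ?B" by (intro Max_ge finite_imageI imageI) auto
    then show ?thesis by (meson abs_ge_zero order_trans)
  qed
  have H: "\<bar>\<Sum>i<j. z i\<bar> \<le> ?A + ?B + ?C" if jj: "j \<in> {1..2*N}" for j
  proof -
    have j: "1 \<le> j" "j \<le> 2 * N" using jj by auto
    define k where "k = j div 2"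
    have kN: "k \<le> N" using j by (simp add: k_def)
    have split: "(\<Sum>i<j. z i) = (\<Sum>i<k. z (2*i) + z (2*i+1) - zp i) + (\<Sum>i<k. zp i)
       + (if odd j then z (2*k) else 0)"
    proof (cases "odd j")
      case True
      then have "j = Suc (2*k)" by (simp add: k_def)
      then have "(\<Sum>i<j. z i) = (\<Sum>i<2*k. z i) + z (2*k)" by simp
      then show ?thesis using True by (simp add: sum_pairs sum_subtractf)
    next
      case False
      then have "j = 2*k" by (simp add: k_def)
      then show ?thesis using False by (simp add: sum_pairs sum_subtractf)
    qed
    have a1: "\<bar>\<Sum>i<k. z (2*i) + z (2*i+1) - zp i\<bar> \<le> ?A"
      using kN by (intro Max_ge) auto
    have a2: "\<bar>\<Sum>i<k. zp i\<bar> \<le> ?B"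
    proof (cases "k = 0")
      case True then show ?thesis using Bnn by simp
    next
      case False then show ?thesis using kN by (intro Max_ge) auto
    qed
    have a3: "\<bar>if odd j then z (2*k) else 0\<bar> \<le> ?C"
    proof (cases "odd j")
      case True
      then have "k < N" using j by (simp add: k_def) presburger
      then show ?thesis using True abs_le_sqrt_sumsq[of "{..<N}" k "\<lambda>i. z (2*i)"] by simp
    next
      case False then show ?thesis by (simp add: sum_nonneg)
    qed
    show "\<bar>\<Sum>i<j. z i\<bar> \<le> ?A + ?B + ?C"
      unfolding split using a1 a2 a3 by linarith
  qed
  show ?thesis using N H by (intro Max.boundedI) auto
qed


locale stat_Z = stat +
  fixes Z :: "'a \<Rightarrow> real"
  assumes Zm: "Z \<in> borel_measurable F0" and Zs: "sqi M Z"
begin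

lemma Z0: "Z \<in> borel_measurable (Fk 0)" using Zm meas_Fk0_iff by simp
lemma ZM: "Z \<in> borel_measurable M" using Zs by (simp add: sqi_def)
lemma Zint: "integrable M Z" using Zs by (rule sqi_integrable)

definition Z2 :: "'a \<Rightarrow> real" where "Z2 x = Z x + Z (T x)"
definition Zp :: "'a \<Rightarrow> real" where "Zp = E 0 Z2"
definition d0 :: "'a \<Rightarrow> real" where "d0 x = Z2 x - Zp x"

lemma ZT1: "(\<lambda>x. Z (T x)) \<in> borel_measurable (Fk 1)"
  using meas_shift[OF Z0, of 1] by simp

lemma Z2_meas: "Z2 \<in> borel_measurable (Fk 1)"
  unfolding Z2_def using meas_Fk_mono[OF _ Z0, of 1] ZT1 by (intro borel_measurable_add) auto

lemma Z2_sqi: "sqi M Z2"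
  unfolding Z2_def using Zs sqi_Tk[OF Zs, of 1] by (intro sqi_add) auto

lemma Z2_norm: "L2norm M Z2 \<le> 2 * L2norm M Z"
proof -
  have "L2norm M Z2 \<le> L2norm M Z + L2norm M (\<lambda>x. Z ((T ^^ 1) x))"
    unfolding Z2_def using L2_triangle[OF Zs sqi_Tk[OF Zs, of 1]] by simp
  also have "L2norm M (\<lambda>x. Z ((T ^^ 1) x)) = L2norm M Z" by (rule L2norm_Tk[OF ZM])
  finally show ?thesis by simp
qed

lemma Zp_meas: "Zp \<in> borel_measurable (Fk 0)" by (simp add: Zp_def)
lemma Zp_F0: "Zp \<in> borel_measurable F0" using Zp_meas meas_Fk0_iff by simp
lemma Zp_sqi: "sqi M Zp" unfolding Zp_def by (rule E_sqi(1)[OF Z2_sqi])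
lemma Zp_norm: "L2norm M Zp \<le> 2 * L2norm M Z"
  unfolding Zp_def using E_sqi(2)[OF Z2_sqi, of 0] Z2_norm by linarith

lemma d0_meas: "d0 \<in> borel_measurable (Fk 1)"
  unfolding d0_def using Z2_meas meas_Fk_mono[OF _ Zp_meas, of 1] by (intro borel_measurable_diff) auto

lemma d0_sqi: "sqi M d0" unfolding d0_def using Z2_sqi Zp_sqi by (intro sqi_diff)

lemma d0_norm: "L2norm M d0 \<le> 4 * L2norm M Z"
  unfolding d0_def using L2_triangle_diff[OF Z2_sqi Zp_sqi] Z2_norm Zp_norm by linarith

lemma E0_d0: "AE x in M. E 0 d0 x = 0"
proof -
  have i2: "integrable M Z2" by (rule sqi_integrable[OF Z2_sqi])
  have ip: "integrable M Zp" by (rule sqi_integrable[OF Zp_sqi])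
  have "AE x in M. E 0 d0 x = E 0 Z2 x - E 0 Zp x"
    unfolding d0_def by (rule E_diff[OF i2 ip])
  moreover have "AE x in M. E 0 Zp x = Zp x" by (rule E_self[OF ip Zp_meas])
  ultimately show ?thesis by eventually_elim (simp add: Zp_def)
qed

definition dd :: "nat \<Rightarrow> 'a \<Rightarrow> real" where "dd i x = d0 ((T ^^ (2*i)) x)"

lemma dd_meas: "dd i \<in> borel_measurable (Fk (Suc (2*i)))"
  unfolding dd_def using meas_shift[OF d0_meas, of "2*i"] by simp

lemma dd_sqi: "sqi M (dd i)" unfolding dd_def by (rule sqi_Tk[OF d0_sqi])

lemma dd_norm: "L2norm M (dd i) = L2norm M d0"
  unfolding dd_def by (rule L2norm_Tk) (use d0_sqi in \<open>simp add: sqi_def\<close>)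

lemma E_dd: "AE x in M. E (2*i) (dd i) x = 0"
proof -
  have "AE x in M. E (2*i) (dd i) x = E 0 d0 ((T ^^ (2*i)) x)"
    unfolding dd_def by (rule E_shift[OF sqi_integrable[OF d0_sqi]])
  moreover have "AE x in M. E 0 d0 ((T ^^ (2*i)) x) = 0" by (rule AE_Tk[OF E0_d0])
  ultimately show ?thesis by eventually_elim simp
qed

lemma dd_orth:
  assumes "h \<in> borel_measurable (Fk (2*i))" "sqi M h"
  shows "integral\<^sup>L M (\<lambda>x. h x * dd i x) = 0"
proof -
  have "integral\<^sup>L M (\<lambda>x. h x * dd i x) = integral\<^sup>L M (\<lambda>x. h x * E (2*i) (dd i) x)"
    by (rule E_intg[symmetric]) (use assms sqi_mult_int[OF assms(2) dd_sqi] dd_sqi in \<open>auto simp: sqi_def\<close>)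
  also have "\<dots> = integral\<^sup>L M (\<lambda>x. 0)"
    by (rule integral_cong_AE) (use E_dd[of i] assms in \<open>auto elim!: eventually_mono simp: sqi_def\<close>)
  finally show ?thesis by simp
qed

lemma E0_dd: "AE x in M. E 0 (dd i) x = 0"
proof -
  have ii: "integrable M (dd i)" by (rule sqi_integrable[OF dd_sqi])
  have "AE x in M. E 0 (E (2*i) (dd i)) x = E 0 (dd i) x" by (rule E_tower[OF _ ii]) simp
  moreover have "AE x in M. E 0 (E (2*i) (dd i)) x = E 0 (\<lambda>x. 0) x"
    by (rule E_cong[OF E_dd]) auto
  moreover have "AE x in M. E 0 (\<lambda>x. 0) x = 0" by (rule E_zero)
  ultimately show ?thesis by eventually_elim simp
qed

lemma S2_decomp:
  "(\<Sum>i<2*k. Z ((T ^^ i) x)) = (\<Sum>i<k. dd i x) + (\<Sum>i<k. Zp ((T ^^ (2*i)) x))"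
proof -
  have "(\<Sum>i<2*k. Z ((T ^^ i) x)) = (\<Sum>i<k. Z ((T ^^ (2*i)) x) + Z ((T ^^ (2*i+1)) x))"
    by (rule sum_pairs)
  also have "\<dots> = (\<Sum>i<k. dd i x + Zp ((T ^^ (2*i)) x))"
    by (intro sum.cong refl) (simp add: dd_def d0_def Z2_def)
  finally show ?thesis by (simp add: sum.distrib)
qed

lemma E0_S2:
  "AE x in M. E 0 (\<lambda>x. \<Sum>i<2*k. Z ((T ^^ i) x)) x = E 0 (\<lambda>x. \<Sum>i<k. Zp ((T ^^ (2*i)) x)) x"
proof -
  have id: "(\<lambda>x. \<Sum>i<2*k. Z ((T ^^ i) x)) = (\<lambda>x. (\<Sum>i<k. dd i x) + (\<Sum>i<k. Zp ((T ^^ (2*i)) x)))"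
    using S2_decomp by auto
  have i1: "integrable M (\<lambda>x. \<Sum>i<k. dd i x)"
    using dd_sqi by (intro sqi_integrable sqi_sum) auto
  have i2: "integrable M (\<lambda>x. \<Sum>i<k. Zp ((T ^^ (2*i)) x))"
    using Zp_sqi by (intro sqi_integrable sqi_sum sqi_Tk) auto
  have a: "AE x in M. E 0 (\<lambda>x. (\<Sum>i<k. dd i x) + (\<Sum>i<k. Zp ((T ^^ (2*i)) x))) x
      = E 0 (\<lambda>x. \<Sum>i<k. dd i x) x + E 0 (\<lambda>x. \<Sum>i<k. Zp ((T ^^ (2*i)) x)) x"
    by (rule E_add[OF i1 i2])
  have b: "AE x in M. E 0 (\<lambda>x. \<Sum>i<k. dd i x) x = (\<Sum>i<k. E 0 (dd i) x)"
    by (rule E_sum) (use dd_sqi sqi_integrable in auto)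
  have c: "AE x in M. \<forall>i\<in>{..<k}. E 0 (dd i) x = 0"
    using E0_dd by (subst AE_finite_all) auto
  show ?thesis unfolding id using a b c by eventually_elim simp
qed

end


lemma sqi_Max_abs:
  assumes "finite I" "I \<noteq> {}" "\<And>k. k \<in> I \<Longrightarrow> sqi M (f k)"
  shows "sqi M (\<lambda>x. Max ((\<lambda>k. \<bar>f k x\<bar>) ` I))"
proof (rule sqi_bound[of _ "\<lambda>x. \<Sum>k\<in>I. \<bar>f k x\<bar>"])
  show "sqi M (\<lambda>x. \<Sum>k\<in>I. \<bar>f k x\<bar>)" using assms by (intro sqi_sum sqi_abs) auto
  show "(\<lambda>x. Max ((\<lambda>k. \<bar>f k x\<bar>) ` I)) \<in> borel_measurable M"
    using assms by (intro borel_measurable_Max borel_measurable_abs) (auto simp: sqi_def)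
  show "AE x in M. \<bar>Max ((\<lambda>k. \<bar>f k x\<bar>) ` I)\<bar> \<le> \<bar>\<Sum>k\<in>I. \<bar>f k x\<bar>\<bar>"
  proof (rule AE_I2)
    fix x
    obtain k0 where k0: "k0 \<in> I" using assms(2) by auto
    have "\<bar>f k0 x\<bar> \<le> Max ((\<lambda>k. \<bar>f k x\<bar>) ` I)" using assms(1) k0 by (intro Max_ge) auto
    then have nn: "0 \<le> Max ((\<lambda>k. \<bar>f k x\<bar>) ` I)" by (meson abs_ge_zero order_trans)
    have "Max ((\<lambda>k. \<bar>f k x\<bar>) ` I) \<le> (\<Sum>k\<in>I. \<bar>f k x\<bar>)"
      using assms(1,2) by (intro Max.boundedI) (auto intro!: member_le_sum)
    then show "\<bar>Max ((\<lambda>k. \<bar>f k x\<bar>) ` I)\<bar> \<le> \<bar>\<Sum>k\<in>I. \<bar>f k x\<bar>\<bar>" using nn by simp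
  qed
qed

context stat_Z
begin

lemma mart_max:
  shows "L2norm M (\<lambda>x. Max ((\<lambda>k. \<bar>\<Sum>i<k. dd i x\<bar>) ` {..N})) \<le> 2 * sqrt (real N) * L2norm M d0"
    and "sqi M (\<lambda>x. Max ((\<lambda>k. \<bar>\<Sum>i<k. dd i x\<bar>) ` {..N}))"
proof -
  have G: "\<And>i. subalgebra M (Fk (2*i))" by (rule subalg_Fk)
  have Dm: "\<And>i j. j < i \<Longrightarrow> dd j \<in> borel_measurable (Fk (2*i))"
    by (rule meas_Fk_mono[OF _ dd_meas]) simp
  have O: "\<And>i h. h \<in> borel_measurable (Fk (2*i)) \<Longrightarrow> sqi M h \<Longrightarrow> integral\<^sup>L M (\<lambda>x. h x * dd i x) = 0"
    by (rule dd_orth)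
  note D = doob_L2[where D=dd and G="\<lambda>i. Fk (2*i)", OF dd_sqi G Dm O]
  show "sqi M (\<lambda>x. Max ((\<lambda>k. \<bar>\<Sum>i<k. dd i x\<bar>) ` {..N}))" by (rule D(2))
  have "integral\<^sup>L M (\<lambda>x. (\<Sum>i<N. dd i x)^2) = (\<Sum>i<N. integral\<^sup>L M (\<lambda>x. (dd i x)^2))"
    by (rule orth_sum[where D=dd and G="\<lambda>i. Fk (2*i)", OF dd_sqi Dm O])
  also have "\<dots> = (\<Sum>i<N. (L2norm M d0)^2)"
    using dd_norm by (simp add: L2norm_sq[symmetric])
  finally have "integral\<^sup>L M (\<lambda>x. (Max ((\<lambda>k. \<bar>\<Sum>i<k. dd i x\<bar>) ` {..N}))^2) \<le> 4 * (real N * (L2norm M d0)^2)"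
    using D(1)[of N] by simp
  then have "sqrt (integral\<^sup>L M (\<lambda>x. (Max ((\<lambda>k. \<bar>\<Sum>i<k. dd i x\<bar>) ` {..N}))^2)) \<le> sqrt (4 * (real N * (L2norm M d0)^2))"
    by (rule real_sqrt_le_mono)
  also have "\<dots> = 2 * sqrt (real N) * L2norm M d0"
    by (simp add: real_sqrt_mult)
  finally show "L2norm M (\<lambda>x. Max ((\<lambda>k. \<bar>\<Sum>i<k. dd i x\<bar>) ` {..N})) \<le> 2 * sqrt (real N) * L2norm M d0"
    by (simp add: L2norm_def)
qed

lemma sqrt_part:
  shows "L2norm M (\<lambda>x. sqrt (\<Sum>i<N. (Z ((T ^^ (2*i)) x))^2)) = sqrt (real N) * L2norm M Z"
    and "sqi M (\<lambda>x. sqrt (\<Sum>i<N. (Z ((T ^^ (2*i)) x))^2))"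
proof -
  have "L2norm M (\<lambda>x. sqrt (\<Sum>i<N. (Z ((T ^^ (2*i)) x))^2)) = sqrt (\<Sum>i<N. (L2norm M (\<lambda>x. Z ((T ^^ (2*i)) x)))^2)"
    by (rule L2_sqrt_sumsq) (auto intro: sqi_Tk[OF Zs])
  also have "\<dots> = sqrt (\<Sum>i<N. (L2norm M Z)^2)" using L2norm_Tk[OF ZM] by simp
  also have "\<dots> = sqrt (real N) * L2norm M Z" by (simp add: real_sqrt_mult)
  finally show "L2norm M (\<lambda>x. sqrt (\<Sum>i<N. (Z ((T ^^ (2*i)) x))^2)) = sqrt (real N) * L2norm M Z" .
  show "sqi M (\<lambda>x. sqrt (\<Sum>i<N. (Z ((T ^^ (2*i)) x))^2))"
  proof (rule sqi_bound[of _ "\<lambda>x. \<Sum>i<N. \<bar>Z ((T ^^ (2*i)) x)\<bar>"])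
    show "sqi M (\<lambda>x. \<Sum>i<N. \<bar>Z ((T ^^ (2 * i)) x)\<bar>)" by (intro sqi_sum sqi_abs sqi_Tk[OF Zs])
    show "(\<lambda>x. sqrt (\<Sum>i<N. (Z ((T ^^ (2 * i)) x))\<^sup>2)) \<in> borel_measurable M"
    proof -
      have [measurable]: "(\<lambda>x. Z ((T ^^ k) x)) \<in> borel_measurable M" for k
        by (rule measurable_compose[OF Tk_meas ZM])
      show ?thesis by measurable
    qed
    show "AE x in M. \<bar>sqrt (\<Sum>i<N. (Z ((T ^^ (2 * i)) x))\<^sup>2)\<bar> \<le> \<bar>\<Sum>i<N. \<bar>Z ((T ^^ (2 * i)) x)\<bar>\<bar>"
    proof (rule AE_I2)
      fix x
      have "sqrt (\<Sum>i<N. (Z ((T ^^ (2 * i)) x))\<^sup>2) \<le> (\<Sum>i<N. \<bar>Z ((T ^^ (2 * i)) x)\<bar>)"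
        by (rule L2_set_le_sum_abs[unfolded L2_set_def])
      then show "\<bar>sqrt (\<Sum>i<N. (Z ((T ^^ (2 * i)) x))\<^sup>2)\<bar> \<le> \<bar>\<Sum>i<N. \<bar>Z ((T ^^ (2 * i)) x)\<bar>\<bar>"
        by (simp add: sum_nonneg)
    qed
  qed
qed

lemma max_step:
  assumes N: "N \<ge> 1"
  shows "L2norm M (\<lambda>x. Max ((\<lambda>j. \<bar>\<Sum>i<j. Z ((T ^^ i) x)\<bar>) ` {1..2*N}))
     \<le> L2norm M (\<lambda>x. Max ((\<lambda>k. \<bar>\<Sum>i<k. Zp ((T ^^ (2*i)) x)\<bar>) ` {1..N})) + 9 * sqrt (real N) * L2norm M Z"
proof -
  define A where "A = (\<lambda>x. Max ((\<lambda>k. \<bar>\<Sum>i<k. dd i x\<bar>) ` {..N}))"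
  define B where "B = (\<lambda>x. Max ((\<lambda>k. \<bar>\<Sum>i<k. Zp ((T ^^ (2*i)) x)\<bar>) ` {1..N}))"
  define C where "C = (\<lambda>x. sqrt (\<Sum>i<N. (Z ((T ^^ (2*i)) x))^2))"
  have As: "sqi M A" unfolding A_def by (rule mart_max(2))
  have Bs: "sqi M B" unfolding B_def using N
    by (intro sqi_Max_abs sqi_sum sqi_Tk[OF Zp_sqi]) auto
  have Cs: "sqi M C" unfolding C_def by (rule sqrt_part(2))
  have pw: "Max ((\<lambda>j. \<bar>\<Sum>i<j. Z ((T ^^ i) x)\<bar>) ` {1..2*N}) \<le> A x + B x + C x" for x
  proof -
    have "Max ((\<lambda>j. \<bar>\<Sum>i<j. Z ((T ^^ i) x)\<bar>) ` {1..2*N})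
      \<le> Max ((\<lambda>k. \<bar>\<Sum>i<k. Z ((T ^^ (2*i)) x) + Z ((T ^^ (2*i+1)) x) - Zp ((T ^^ (2*i)) x)\<bar>) ` {..N})
       + Max ((\<lambda>k. \<bar>\<Sum>i<k. Zp ((T ^^ (2*i)) x)\<bar>) ` {1..N})
       + sqrt (\<Sum>i<N. (Z ((T ^^ (2*i)) x))^2)"
      by (rule max_split[OF N])
    also have "(\<lambda>k. \<bar>\<Sum>i<k. Z ((T ^^ (2*i)) x) + Z ((T ^^ (2*i+1)) x) - Zp ((T ^^ (2*i)) x)\<bar>)
       = (\<lambda>k. \<bar>\<Sum>i<k. dd i x\<bar>)"
      by (simp add: dd_def d0_def Z2_def)
    finally show ?thesis by (simp add: A_def B_def C_def)
  qed
  have ABC: "sqi M (\<lambda>x. A x + B x + C x)" using As Bs Cs by (intro sqi_add)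
  have Lm: "(\<lambda>x. Max ((\<lambda>j. \<bar>\<Sum>i<j. Z ((T ^^ i) x)\<bar>) ` {1..2*N})) \<in> borel_measurable M"
    using measurable_compose[OF Tk_meas ZM]
    by (intro borel_measurable_Max borel_measurable_abs borel_measurable_sum) auto
  have nnL: "0 \<le> Max ((\<lambda>j. \<bar>\<Sum>i<j. Z ((T ^^ i) x)\<bar>) ` {1..2*N})" for x
  proof -
    have "1 \<in> {1..2*N}" using N by simp
    then have "\<bar>\<Sum>i<1. Z ((T ^^ i) x)\<bar> \<le> Max ((\<lambda>j. \<bar>\<Sum>i<j. Z ((T ^^ i) x)\<bar>) ` {1..2*N})"
      by (intro Max_ge finite_imageI imageI) auto
    then show ?thesis by (meson abs_ge_zero order_trans)
  qed
  have "L2norm M (\<lambda>x. Max ((\<lambda>j. \<bar>\<Sum>i<j. Z ((T ^^ i) x)\<bar>) ` {1..2*N})) \<le> L2norm M (\<lambda>x. A x + B x + C x)"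
  proof (rule L2_mono[OF ABC Lm AE_I2])
    fix x show "\<bar>Max ((\<lambda>j. \<bar>\<Sum>i<j. Z ((T ^^ i) x)\<bar>) ` {1..2*N})\<bar> \<le> \<bar>A x + B x + C x\<bar>"
      using pw[of x] nnL[of x] by simp
  qed
  also have "\<dots> \<le> L2norm M (\<lambda>x. A x + B x) + L2norm M C"
    using As Bs Cs by (intro L2_triangle sqi_add)
  also have "\<dots> \<le> L2norm M A + L2norm M B + L2norm M C"
    using L2_triangle[OF As Bs] by simp
  also have "L2norm M A \<le> 2 * sqrt (real N) * L2norm M d0" unfolding A_def by (rule mart_max(1))
  also have "\<dots> \<le> 2 * sqrt (real N) * (4 * L2norm M Z)"
    using d0_norm by (intro mult_left_mono) auto
  also have "L2norm M C = sqrt (real N) * L2norm M Z" unfolding C_def by (rule sqrt_part(1))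
  finally show ?thesis by (simp add: B_def algebra_simps)
qed

end


definition Qn :: "'a measure \<Rightarrow> ('a \<Rightarrow> 'a) \<Rightarrow> 'a measure \<Rightarrow> ('a \<Rightarrow> real) \<Rightarrow> nat \<Rightarrow> real" where
  "Qn M T F0 Z k = L2norm M (real_cond_exp M (vimage_algebra (space M) id F0) (\<lambda>x. \<Sum>i<k. Z ((T ^^ i) x)))"

definition MXn :: "'a measure \<Rightarrow> ('a \<Rightarrow> 'a) \<Rightarrow> ('a \<Rightarrow> real) \<Rightarrow> nat \<Rightarrow> real" where
  "MXn M T Z n = L2norm M (\<lambda>x. Max ((\<lambda>j. \<bar>\<Sum>i<j. Z ((T ^^ i) x)\<bar>) ` {1..n}))"

context stat
begin

lemma E0_eq: "E 0 f = real_cond_exp M (vimage_algebra (space M) id F0) f"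
  by (simp add: E_def Fk_def)

lemma stat_sq: "stat M (T ^^ 2) F0"
proof -
  have "sets F0 = sets (Fk 0)" using sets_Fk0 by simp
  also have "\<dots> \<subseteq> sets (Fk 2)" by (rule Fk_mono) simp
  finally have n: "sets F0 \<subseteq> sets (vimage_algebra (space M) (T ^^ 2) F0)" by (simp add: Fk_def)
  show ?thesis by (rule stat.intro[OF PS Tk_meas Tk_pres sub n])
qed

end

lemma maxineq:
  assumes "stat M T F0" "Z \<in> borel_measurable F0" "sqi M Z"
  shows "MXn M T Z (2^r) \<le> Qn M T F0 Z (2^r) + 9 * (\<Sum>l<r. sqrt (2^(r-l-1)) * Qn M T F0 Z (2^l))"
  using assms
proof (induction r arbitrary: T Z)
  case 0
  interpret stat_Z M T F0 Z by (rule stat_Z.intro[OF 0(1)]) (unfold_locales; fact 0)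
  have "MXn M T Z (2^0) = L2norm M (\<lambda>x. \<bar>Z x\<bar>)" by (simp add: MXn_def)
  also have "\<dots> = L2norm M Z" by (simp add: L2norm_def)
  also have "\<dots> = L2norm M (E 0 Z)"
    by (rule L2norm_cong_AE[OF AE_symmetric[OF E_self[OF Zint Z0]]]) (auto simp: ZM)
  also have "\<dots> = Qn M T F0 Z (2^0)" by (simp add: Qn_def E0_eq)
  finally show ?case by simp
next
  case (Suc r)
  interpret stat_Z M T F0 Z by (rule stat_Z.intro[OF Suc(2)]) (unfold_locales; fact Suc)
  have st2: "stat M (T ^^ 2) F0" by (rule stat_sq)
  note IH = Suc(1)[OF st2 Zp_F0 Zp_sqi]
  have Teq: "((T ^^ 2) ^^ i) = T ^^ (2 * i)" for i by (simp add: funpow_mult)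
  have Qrel: "Qn M (T ^^ 2) F0 Zp k = Qn M T F0 Z (2 * k)" for k
  proof -
    have "Qn M (T ^^ 2) F0 Zp k = L2norm M (E 0 (\<lambda>x. \<Sum>i<k. Zp ((T ^^ (2*i)) x)))"
      by (simp add: Qn_def E0_eq Teq)
    also have "\<dots> = L2norm M (E 0 (\<lambda>x. \<Sum>i<2*k. Z ((T ^^ i) x)))"
      by (rule L2norm_cong_AE[OF AE_symmetric[OF E0_S2]]) auto
    also have "\<dots> = Qn M T F0 Z (2 * k)" by (simp add: Qn_def E0_eq)
    finally show ?thesis .
  qed
  have Q0: "Qn M T F0 Z 1 = L2norm M Z"
  proof -
    have "Qn M T F0 Z 1 = L2norm M (E 0 Z)" by (simp add: Qn_def E0_eq)
    also have "\<dots> = L2norm M Z"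
      by (rule L2norm_cong_AE[OF E_self[OF Zint Z0]]) (auto simp: ZM)
    finally show ?thesis .
  qed
  have N1: "(2::nat)^r \<ge> 1" by simp
  have "MXn M T Z (2^Suc r) \<le> MXn M (T ^^ 2) Zp (2^r) + 9 * sqrt (real (2^r)) * L2norm M Z"
    using max_step[OF N1] by (simp add: MXn_def Teq)
  also have "MXn M (T ^^ 2) Zp (2^r) \<le> Qn M (T ^^ 2) F0 Zp (2^r) + 9 * (\<Sum>l<r. sqrt (2^(r-l-1)) * Qn M (T ^^ 2) F0 Zp (2^l))"
    by (rule IH)
  also have "\<dots> = Qn M T F0 Z (2^Suc r) + 9 * (\<Sum>l<r. sqrt (2^(r-l-1)) * Qn M T F0 Z (2^Suc l))"
    by (simp add: Qrel)
  finally have "MXn M T Z (2^Suc r) \<le> Qn M T F0 Z (2^Suc r)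
     + 9 * ((\<Sum>l<r. sqrt (2^(r-l-1)) * Qn M T F0 Z (2^Suc l)) + sqrt (2^r) * Qn M T F0 Z (2^0))"
    using Q0 by (simp add: algebra_simps)
  also have "(\<Sum>l<r. sqrt (2^(r-l-1)) * Qn M T F0 Z (2^Suc l)) + sqrt (2^r) * Qn M T F0 Z (2^0)
      = (\<Sum>l<Suc r. sqrt (2^(Suc r-l-1)) * Qn M T F0 Z (2^l))"
    by (subst sum.lessThan_Suc_shift) simp
  finally show ?case .
qed


locale numer =
  fixes a :: "nat \<Rightarrow> real" and m :: nat
  assumes a_nn: "\<And>k. a k \<ge> 0"
    and subadd: "\<And>j k. 0 < j \<Longrightarrow> j < k \<Longrightarrow> a j \<le> a k + a (k - j)"
    and summ: "summable (\<lambda>i. a (Suc i) / (real (Suc i) * sqrt (real (Suc i))))"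
    and m1: "m \<ge> 1"
begin

definition b :: "nat \<Rightarrow> real" where "b k = a k / (real k * sqrt (real k))"

definition R :: real where "R = (\<Sum>i. b (i + m + 1))"

lemma b_nn: "b k \<ge> 0" by (simp add: b_def a_nn)

lemma a_eq: "k \<ge> 1 \<Longrightarrow> a k = b k * (real k * sqrt (real k))"
  by (simp add: b_def)

lemma summR: "summable (\<lambda>i. b (i + m + 1))"
proof -
  have "summable (\<lambda>i. b (Suc i))" using summ by (simp add: b_def)
  then have "summable (\<lambda>i. b (Suc (i + m)))" using summable_iff_shift[of "\<lambda>i. b (Suc i)" m] by simp
  then show ?thesis by simp
qed

lemma R_nn: "R \<ge> 0" unfolding R_def by (rule suminf_nonneg[OF summR b_nn])

lemma sumR:
  assumes "finite A" "\<And>k. k \<in> A \<Longrightarrow> k > m"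
  shows "(\<Sum>k\<in>A. b k) \<le> R"
proof -
  have inj: "inj_on (\<lambda>k. k - (m + 1)) A"
    unfolding inj_on_def
  proof (intro ballI impI)
    fix x y assume "x \<in> A" "y \<in> A" "x - (m + 1) = y - (m + 1)"
    moreover have "x > m" "y > m" using assms(2) \<open>x \<in> A\<close> \<open>y \<in> A\<close> by auto
    ultimately show "x = y" by presburger
  qed
  have "(\<Sum>k\<in>A. b k) = (\<Sum>i\<in>(\<lambda>k. k - (m + 1)) ` A. b (i + m + 1))"
  proof (subst sum.reindex[OF inj], intro sum.cong refl)
    fix x assume "x \<in> A"
    then have "x > m" using assms(2) by auto
    then have "x - (m + 1) + m + 1 = x" by simp
    then show "b x = ((\<lambda>i. b (i + m + 1)) \<circ> (\<lambda>k. k - (m + 1))) x" by simp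
  qed
  also have "\<dots> \<le> R" unfolding R_def
    by (rule sum_le_suminf[OF summR]) (use assms(1) b_nn in auto)
  finally show ?thesis .
qed

lemma genG:
  assumes j: "j \<ge> 1" and N: "N \<ge> 1"
  shows "real N * a j \<le> (\<Sum>k\<in>{N+j+1..2*N+j}. a k) + (\<Sum>i\<in>{N+1..2*N}. a i)"
proof -
  have "real N * a j = (\<Sum>k\<in>{N+j+1..2*N+j}. a j)" by simp
  also have "\<dots> \<le> (\<Sum>k\<in>{N+j+1..2*N+j}. a k + a (k - j))"
    using j by (intro sum_mono subadd) auto
  also have "\<dots> = (\<Sum>k\<in>{N+j+1..2*N+j}. a k) + (\<Sum>k\<in>{N+j+1..2*N+j}. a (k - j))"
    by (simp add: sum.distrib)
  also have "(\<Sum>k\<in>{N+j+1..2*N+j}. a (k - j)) = (\<Sum>i\<in>{N+1..2*N}. a i)"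
  proof -
    have "{N+j+1..2*N+j} = {(N+1)+j..(2*N)+j}" by simp
    then have "(\<Sum>k\<in>{N+j+1..2*N+j}. a (k - j)) = (\<Sum>i\<in>{N+1..2*N}. a (i + j - j))"
      by (simp only: sum.shift_bounds_cl_nat_ivl)
    then show ?thesis by simp
  qed
  finally show ?thesis .
qed

lemma sum_a_le:
  assumes "\<And>k. k \<in> A \<Longrightarrow> 1 \<le> k \<and> k \<le> K" "finite A"
  shows "(\<Sum>k\<in>A. a k) \<le> (real K * sqrt (real K)) * (\<Sum>k\<in>A. b k)"
proof -
  have "(\<Sum>k\<in>A. a k) = (\<Sum>k\<in>A. b k * (real k * sqrt (real k)))"
    using assms by (intro sum.cong) (auto simp: a_eq)
  also have "\<dots> \<le> (\<Sum>k\<in>A. b k * (real K * sqrt (real K)))"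
    using assms b_nn by (intro sum_mono mult_left_mono mult_mono) auto
  finally show ?thesis by (simp add: sum_distrib_right mult.commute)
qed

lemma F3:
  assumes j: "j \<ge> 1"
  shows "a j \<le> 6 * sqrt (real j) * (\<Sum>k\<in>{j+1..3*j}. b k)"
proof -
  have E: "{j + j + 1..2 * j + j} = {2*j+1..3*j}" by (intro arg_cong2[where f=atLeastAtMost]) auto
  have "real j * a j \<le> (\<Sum>k\<in>{2*j+1..3*j}. a k) + (\<Sum>i\<in>{j+1..2*j}. a i)"
    using genG[OF j j] unfolding E .
  also have "\<dots> = (\<Sum>k\<in>{j+1..3*j}. a k)"
  proof -
    have "{j+1..3*j} = {j+1..2*j} \<union> {2*j+1..3*j}" by auto
    moreover have "{j+1..2*j} \<inter> {2*j+1..3*j} = {}" by auto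
    ultimately show ?thesis by (simp add: sum.union_disjoint add.commute)
  qed
  also have "\<dots> \<le> (real (3*j) * sqrt (real (3*j))) * (\<Sum>k\<in>{j+1..3*j}. b k)"
    by (rule sum_a_le) auto
  finally have H: "real j * a j \<le> (real (3*j) * sqrt (real (3*j))) * (\<Sum>k\<in>{j+1..3*j}. b k)" .
  have s3: "sqrt 3 \<le> 2" by (rule real_le_lsqrt) auto
  have W: "0 \<le> (\<Sum>k\<in>{j+1..3*j}. b k)" by (rule sum_nonneg) (rule b_nn)
  have "real (3*j) * sqrt (real (3*j)) = real j * (3 * sqrt 3 * sqrt (real j))"
    by (simp add: real_sqrt_mult)
  also have "\<dots> \<le> real j * (6 * sqrt (real j))"
    using s3 by (intro mult_left_mono mult_right_mono) auto
  finally have "real j * a j \<le> real j * (6 * sqrt (real j) * (\<Sum>k\<in>{j+1..3*j}. b k))"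
    using H W by (smt (verit) mult.assoc mult_right_mono)
  then show ?thesis using j by simp
qed

lemma F2:
  assumes j: "j \<ge> 1" and N: "N \<ge> j" "N \<ge> m"
  shows "a j \<le> 12 * sqrt (real N) * R"
proof -
  have N1: "N \<ge> 1" using j N by simp
  have A: "(\<Sum>k\<in>A. a k) \<le> (real (3*N) * sqrt (real (3*N))) * R" if "A \<subseteq> {m+1..3*N}" for A
  proof -
    have fA: "finite A" using that finite_subset by blast
    have "(\<Sum>k\<in>A. a k) \<le> (real (3*N) * sqrt (real (3*N))) * (\<Sum>k\<in>A. b k)"
      by (rule sum_a_le) (use that fA in auto)
    also have "\<dots> \<le> (real (3*N) * sqrt (real (3*N))) * R"
      by (intro mult_left_mono sumR) (use that fA in auto)
    finally show ?thesis .
  qed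
  have "real N * a j \<le> (\<Sum>k\<in>{N+j+1..2*N+j}. a k) + (\<Sum>i\<in>{N+1..2*N}. a i)"
    by (rule genG[OF j N1])
  also have "\<dots> \<le> 2 * ((real (3*N) * sqrt (real (3*N))) * R)"
    using A[of "{N+j+1..2*N+j}"] A[of "{N+1..2*N}"] N by force
  finally have H: "real N * a j \<le> 2 * ((real (3*N) * sqrt (real (3*N))) * R)" .
  have s3: "sqrt 3 \<le> 2" by (rule real_le_lsqrt) auto
  have "2 * ((real (3*N) * sqrt (real (3*N))) * R) = real N * (6 * sqrt 3 * sqrt (real N) * R)"
    by (simp add: real_sqrt_mult)
  also have "\<dots> \<le> real N * (12 * sqrt (real N) * R)"
    using s3 R_nn by (intro mult_left_mono mult_right_mono) auto
  finally have "2 * ((real (3*N) * sqrt (real (3*N))) * R) \<le> real N * (12 * sqrt (real N) * R)" .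
  then have "real N * a j \<le> real N * (12 * sqrt (real N) * R)" using H by linarith
  then show ?thesis using N1 by (simp add: mult_le_cancel_left_pos)
qed

end


lemma ivl_split:
  fixes f :: "nat \<Rightarrow> real"
  assumes "a \<le> b" "b \<le> c"
  shows "(\<Sum>k\<in>{a<..c}. f k) = (\<Sum>k\<in>{a<..b}. f k) + (\<Sum>k\<in>{b<..c}. f k)"
proof -
  have "{a<..c} = {a<..b} \<union> {b<..c}" using assms by auto
  moreover have "{a<..b} \<inter> {b<..c} = {}" by auto
  ultimately show ?thesis by (simp add: sum.union_disjoint)
qed

lemma sqrt2_bounds: "sqrt 2 \<le> (1.5::real)" "sqrt 2 \<ge> (1.4::real)"
proof -
  show "sqrt 2 \<le> (1.5::real)" by (rule real_le_lsqrt) (auto simp: power2_eq_square)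
  show "sqrt 2 \<ge> (1.4::real)" by (rule real_le_rsqrt) (auto simp: power2_eq_square)
qed

lemma G1:
  fixes m :: nat
  shows "(\<Sum>l<n. if 2^l \<le> m then sqrt (2^l) else 0) \<le> 4 * sqrt (real m)"
proof -
  define c :: real where "c = sqrt 2 + 1"
  have inv: "(\<Sum>l<n. if 2^l \<le> m then sqrt (2^l) else 0) \<le> c * (sqrt (2^n) - 1)
     \<and> (\<Sum>l<n. if 2^l \<le> m then sqrt (2^l) else 0) \<le> c * sqrt (2 * real m)" for n
  proof (induction n)
    case 0 then show ?case by (simp add: c_def)
  next
    case (Suc n)
    let ?S = "\<Sum>l<n. if 2^l \<le> m then sqrt ((2::real)^l) else 0"
    have sq: "sqrt ((2::real)^Suc n) = sqrt 2 * sqrt (2^n)" by (simp add: real_sqrt_mult)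
    have p: "sqrt ((2::real)^n) \<ge> 1" by simp
    show ?case
    proof (cases "2^n \<le> m")
      case True
      have "?S + sqrt (2^n) \<le> c * (sqrt (2^n) - 1) + sqrt (2^n)" using Suc by simp
      also have "\<dots> = c * (sqrt (2^Suc n) - 1)" unfolding sq c_def by (simp add: algebra_simps)
      finally have A: "?S + sqrt (2^n) \<le> c * (sqrt (2^Suc n) - 1)" .
      have "real (2^Suc n) \<le> 2 * real m" using True by simp
      then have "sqrt (2^Suc n) \<le> sqrt (2 * real m)" by (simp del: of_nat_power add: of_nat_power[symmetric])
      then have "sqrt (2^Suc n) - 1 \<le> sqrt (2 * real m)" by linarith
      then have B: "c * (sqrt (2^Suc n) - 1) \<le> c * sqrt (2 * real m)"
        unfolding c_def by (intro mult_left_mono) auto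
      show ?thesis using True A B by simp
    next
      case False
      have "c * (sqrt (2^n) - 1) \<le> c * (sqrt (2^Suc n) - 1)" unfolding c_def
        by (intro mult_left_mono) auto
      then show ?thesis using False Suc by simp
    qed
  qed
  have "c * sqrt (2 * real m) = (2 + sqrt 2) * sqrt (real m)"
    by (simp add: c_def real_sqrt_mult algebra_simps)
  also have "\<dots> \<le> 4 * sqrt (real m)" using sqrt2_bounds by (intro mult_right_mono) auto
  finally show ?thesis using inv[of n] by linarith
qed

lemma G2:
  fixes m :: nat
  assumes "m \<ge> 1"
  shows "(\<Sum>l<n. if 2^l > m then 1 / sqrt (2^l) else 0) \<le> 4 / sqrt (real m)"
proof -
  define c :: real where "c = 2 + sqrt 2"
  have c1: "c * (1 - 1 / sqrt 2) = 1"
    by (simp add: c_def field_simps)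
  have inv: "(\<Sum>l<n. if 2^l > m then 1 / sqrt (2^l) else 0) \<le> c * max 0 (1 / sqrt m - 1 / sqrt (2^n))" for n
  proof (induction n)
    case 0 then show ?case by (simp add: c_def)
  next
    case (Suc n)
    let ?S = "\<Sum>l<n. if 2^l > m then 1 / sqrt ((2::real)^l) else 0"
    have sq: "sqrt ((2::real)^Suc n) = sqrt 2 * sqrt (2^n)" by (simp add: real_sqrt_mult)
    have mono: "1 / sqrt ((2::real)^Suc n) \<le> 1 / sqrt (2^n)" by (simp add: sq field_simps)
    show ?case
    proof (cases "2^n > m")
      case True
      have lt: "1 / sqrt (2^n) < 1 / sqrt (real m)"
        using True assms by (simp add: field_simps del: of_nat_power add: of_nat_power[symmetric])
      have "?S + 1 / sqrt (2^n) \<le> c * (1 / sqrt m - 1 / sqrt (2^n)) + 1 / sqrt (2^n)"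
        using Suc lt by simp
      also have "\<dots> = c * (1 / sqrt m - 1 / sqrt (2^Suc n)) + (1 - c * (1 - 1 / sqrt 2)) / sqrt (2^n)"
        unfolding sq by (simp add: field_simps)
      also have "\<dots> = c * (1 / sqrt m - 1 / sqrt (2^Suc n))" using c1 by simp
      also have "\<dots> \<le> c * max 0 (1 / sqrt m - 1 / sqrt (2^Suc n))"
        unfolding c_def by (intro mult_left_mono) auto
      finally show ?thesis using True by simp
    next
      case False
      have "c * max 0 (1 / sqrt m - 1 / sqrt (2^n)) \<le> c * max 0 (1 / sqrt m - 1 / sqrt (2^Suc n))"
        unfolding c_def using mono by (intro mult_left_mono) auto
      then show ?thesis using False Suc by simp
    qed
  qed
  have "c * max 0 (1 / sqrt m - 1 / sqrt (2^n)) \<le> c * (1 / sqrt m)"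
    unfolding c_def by (intro mult_left_mono) auto
  also have "\<dots> \<le> 4 / sqrt m" using sqrt2_bounds by (simp add: c_def divide_right_mono)
  finally show ?thesis using inv[of n] by linarith
qed

context numer
begin

definition V :: "nat \<Rightarrow> real" where "V l = (\<Sum>k\<in>{2^l<..2^Suc l}. b k)"
definition U :: "nat \<Rightarrow> real" where "U L = (\<Sum>k\<in>{L<..6*L}. b k)"

lemma V_nn: "V l \<ge> 0" unfolding V_def by (intro sum_nonneg b_nn)

lemma U_le: "U (2^l) \<le> V l + V (Suc l) + V (Suc (Suc l))"
proof -
  have p3: "(2::nat)^Suc (Suc (Suc l)) = 8 * 2^l" by simp
  have sub: "{2^l<..6*2^l} \<subseteq> {(2::nat)^l<..2^Suc (Suc (Suc l))}" unfolding p3 by auto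
  have "U (2^l) \<le> (\<Sum>k\<in>{2^l<..2^(Suc (Suc (Suc l)))}. b k)"
    unfolding U_def by (rule sum_mono2[OF _ sub]) (auto intro: b_nn)
  also have "\<dots> = (\<Sum>k\<in>{2^l<..2^Suc l}. b k) + (\<Sum>k\<in>{2^Suc l<..2^Suc (Suc (Suc l))}. b k)"
    by (rule ivl_split) (simp_all add: power_increasing)
  also have "(\<Sum>k\<in>{2^Suc l<..2^Suc (Suc (Suc l))}. b k)
      = (\<Sum>k\<in>{2^Suc l<..2^Suc (Suc l)}. b k) + (\<Sum>k\<in>{2^Suc (Suc l)<..2^Suc (Suc (Suc l))}. b k)"
    by (rule ivl_split) (simp_all add: power_increasing)
  finally show ?thesis by (simp add: V_def)
qed

lemma W_inv: "(\<Sum>l<n. if 2^l > m then V l else 0) \<le> (\<Sum>k\<in>{m<..2^n}. b k)"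
proof (induction n)
  case (Suc n)
  show ?case
  proof (cases "2^n > m")
    case True
    have "(\<Sum>k\<in>{m<..2^Suc n}. b k) = (\<Sum>k\<in>{m<..2^n}. b k) + V n"
      unfolding V_def using True by (intro ivl_split) auto
    then show ?thesis using Suc True by simp
  next
    case False
    have "(\<Sum>k\<in>{m<..2^n}. b k) \<le> (\<Sum>k\<in>{m<..2^Suc n}. b k)"
      by (rule sum_mono2) (auto intro: b_nn)
    then show ?thesis using Suc False by simp
  qed
qed (simp add: sum_nonneg b_nn)

lemma W_R: "(\<Sum>l<n. if 2^l > m then V l else 0) \<le> R"
  using W_inv[of n] sumR[of "{m<..2^n}"] by simp

lemma Vshift: "(\<Sum>l<n. if 2^l > m then V (l + t) else 0) \<le> R"
proof -
  have "(\<Sum>l<n. if 2^l > m then V (l + t) else 0) \<le> (\<Sum>l<n. if 2^(l+t) > m then V (l + t) else 0)"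
  proof (rule sum_mono)
    fix l
    have "(2::nat)^l \<le> 2^(l+t)" by (simp add: power_increasing)
    then have "m < 2^l \<longrightarrow> m < 2^(l+t)" by linarith
    then show "(if 2^l > m then V (l + t) else 0) \<le> (if 2^(l+t) > m then V (l + t) else 0)"
      using V_nn[of "l+t"] by (auto split: if_splits)
  qed
  also have "\<dots> = (\<Sum>l\<in>{t..<n+t}. if 2^l > m then V l else 0)"
    using sum.shift_bounds_nat_ivl[of "\<lambda>l. if 2^l > m then V l else 0" 0 t n]
    by (simp add: atLeast0LessThan)
  also have "\<dots> \<le> (\<Sum>l<n+t. if 2^l > m then V l else 0)"
    by (rule sum_mono2) (auto intro: V_nn)
  also have "\<dots> \<le> R" by (rule W_R)
  finally show ?thesis .
qed

lemma G3: "(\<Sum>l<n. if 2^l > m then U (2^l) else 0) \<le> 3 * R"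
proof -
  have "(\<Sum>l<n. if 2^l > m then U (2^l) else 0)
     \<le> (\<Sum>l<n. (if 2^l > m then V (l + 0) else 0) + (if 2^l > m then V (l + 1) else 0) + (if 2^l > m then V (l + 2) else 0))"
    using U_le by (intro sum_mono) auto
  also have "\<dots> = (\<Sum>l<n. if 2^l > m then V (l + 0) else 0) + (\<Sum>l<n. if 2^l > m then V (l + 1) else 0)
      + (\<Sum>l<n. if 2^l > m then V (l + 2) else 0)" by (simp add: sum.distrib)
  also have "\<dots> \<le> R + R + R" by (intro add_mono Vshift)
  finally show ?thesis by simp
qed

end


context numer
begin

lemma eA:
  assumes L: "1 \<le> L" "L \<le> m"
    and H1: "e \<le> (1 / real m) * (\<Sum>i<L. a (i + m + 1) + a (i + 1))"
  shows "e \<le> 36 * real L / sqrt (real m) * R"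
proof -
  have t: "a (i + m + 1) + a (i + 1) \<le> 24 * sqrt (real (2*m)) * R" if "i < L" for i
  proof -
    have "a (i + m + 1) \<le> 12 * sqrt (real (2*m)) * R" using that L by (intro F2) auto
    moreover have "a (i + 1) \<le> 12 * sqrt (real (2*m)) * R" using that L by (intro F2) auto
    ultimately show ?thesis by simp
  qed
  have "(\<Sum>i<L. a (i + m + 1) + a (i + 1)) \<le> (\<Sum>i<L. 24 * sqrt (real (2*m)) * R)"
    by (rule sum_mono) (rule t, simp)
  also have "\<dots> = real L * (24 * sqrt 2 * sqrt (real m) * R)" by (simp add: real_sqrt_mult)
  finally have S: "(\<Sum>i<L. a (i + m + 1) + a (i + 1)) \<le> real L * (24 * sqrt 2 * sqrt (real m) * R)" .
  have m0: "real m > 0" using m1 by simp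
  have "(1 / real m) * (\<Sum>i<L. a (i + m + 1) + a (i + 1)) \<le> (1 / real m) * (real L * (24 * sqrt 2 * sqrt (real m) * R))"
    using S m0 by (intro mult_left_mono) auto
  then have "e \<le> (1 / real m) * (real L * (24 * sqrt 2 * sqrt (real m) * R))"
    using H1 by linarith
  also have "\<dots> = 24 * sqrt 2 * real L / sqrt (real m) * R"
  proof -
    have s0: "sqrt (real m) > 0" using m0 by simp
    have msq: "real m = sqrt (real m) * sqrt (real m)" by simp
    show ?thesis by (subst msq) (use s0 in \<open>simp add: field_simps\<close>)
  qed
  also have "\<dots> \<le> 36 * real L / sqrt (real m) * R"
    using sqrt2_bounds R_nn m0 by (intro mult_right_mono divide_right_mono) auto
  finally show ?thesis .
qed

lemma eB:
  assumes L: "m \<le> L"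
    and H2: "e \<le> (1 / real m) * (\<Sum>t\<in>{1..m}. a (L + t) + a t)"
  shows "e \<le> 9 * sqrt (real L) * U L + 12 * sqrt (real m) * R"
proof -
  have UL: "U L \<ge> 0" unfolding U_def by (intro sum_nonneg b_nn)
  have t: "a (L + t) + a t \<le> 6 * sqrt 2 * sqrt (real L) * U L + 12 * sqrt (real m) * R" if "t \<in> {1..m}" for t
  proof -
    have t1: "1 \<le> t" "t \<le> m" using that by auto
    have at: "a t \<le> 12 * sqrt (real m) * R" using t1 by (intro F2) auto
    define W where "W = (\<Sum>k\<in>{L+t+1..3*(L+t)}. b k)"
    have W0: "W \<ge> 0" unfolding W_def by (intro sum_nonneg b_nn)
    have a1: "a (L + t) \<le> 6 * sqrt (real (L + t)) * W"
      unfolding W_def using t1 by (intro F3) auto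
    have WU: "W \<le> U L"
      unfolding U_def W_def using t1 L by (intro sum_mono2) (auto intro: b_nn)
    have sq: "sqrt (real (L + t)) \<le> sqrt 2 * sqrt (real L)"
      using t1 L by (simp add: real_sqrt_mult[symmetric])
    have "6 * sqrt (real (L + t)) * W \<le> 6 * (sqrt 2 * sqrt (real L)) * W"
      using sq W0 by (intro mult_right_mono) auto
    also have "\<dots> \<le> 6 * (sqrt 2 * sqrt (real L)) * U L"
      using WU by (intro mult_left_mono) auto
    finally have "a (L + t) \<le> 6 * (sqrt 2 * sqrt (real L)) * U L" using a1 by linarith
    then have "a (L + t) + a t \<le> 6 * (sqrt 2 * sqrt (real L)) * U L + 12 * sqrt (real m) * R"
      using at by linarith
    then show ?thesis by (simp add: mult.assoc)
  qed
  have "(\<Sum>t\<in>{1..m}. a (L + t) + a t) \<le> (\<Sum>t\<in>{1..m}. 6 * sqrt 2 * sqrt (real L) * U L + 12 * sqrt (real m) * R)"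
    by (rule sum_mono) (rule t)
  also have "\<dots> = real m * (6 * sqrt 2 * sqrt (real L) * U L + 12 * sqrt (real m) * R)" by simp
  finally have S: "(\<Sum>t\<in>{1..m}. a (L + t) + a t) \<le> real m * (6 * sqrt 2 * sqrt (real L) * U L + 12 * sqrt (real m) * R)" .
  have m0: "real m > 0" using m1 by simp
  have "e \<le> 6 * sqrt 2 * sqrt (real L) * U L + 12 * sqrt (real m) * R"
  proof -
    have "(1 / real m) * (\<Sum>t\<in>{1..m}. a (L + t) + a t) \<le> (1 / real m) * (real m * (6 * sqrt 2 * sqrt (real L) * U L + 12 * sqrt (real m) * R))"
      using S m0 by (intro mult_left_mono) auto
    then have "e \<le> (1 / real m) * (real m * (6 * sqrt 2 * sqrt (real L) * U L + 12 * sqrt (real m) * R))"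
      using H2 by linarith
    then show ?thesis using m0 by simp
  qed
  also have "6 * sqrt 2 * sqrt (real L) * U L \<le> 9 * sqrt (real L) * U L"
    using sqrt2_bounds UL by (intro mult_right_mono) auto
  finally show ?thesis by simp
qed

lemma total:
  assumes H1: "\<And>L. 1 \<le> L \<Longrightarrow> e L \<le> (1 / real m) * (\<Sum>i<L. a (i + m + 1) + a (i + 1))"
    and H2: "\<And>L. 1 \<le> L \<Longrightarrow> e L \<le> (1 / real m) * (\<Sum>t\<in>{1..m}. a (L + t) + a t)"
  shows "(\<Sum>l<n. e (2^l) / sqrt (2^l)) \<le> 219 * R"
proof -
  have m0: "sqrt (real m) > 0" using m1 by simp
  have pt: "e (2^l) / sqrt (2^l) \<le> (36 * R / sqrt (real m)) * (if 2^l \<le> m then sqrt (2^l) else 0)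
      + 9 * (if 2^l > m then U (2^l) else 0) + (12 * sqrt (real m) * R) * (if 2^l > m then 1 / sqrt (2^l) else 0)" for l
  proof (cases "2^l \<le> m")
    case True
    have "e (2^l) \<le> 36 * real (2^l) / sqrt (real m) * R"
      by (rule eA[OF _ True H1]) simp_all
    then have "e (2^l) / sqrt (2^l) \<le> (36 * real (2^l) / sqrt (real m) * R) / sqrt (2^l)"
      by (intro divide_right_mono) auto
    also have "\<dots> = (36 * R / sqrt (real m)) * sqrt (2^l)"
    proof -
      have q: "real (2^l) = sqrt (2^l) * sqrt (2^l)" by simp
      have q0: "sqrt ((2::real)^l) > 0" by simp
      show ?thesis by (subst q) (use q0 m0 in \<open>simp add: field_simps\<close>)
    qed
    finally show ?thesis using True by simp
  next
    case False
    have "e (2^l) \<le> 9 * sqrt (real (2^l)) * U (2^l) + 12 * sqrt (real m) * R"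
      by (rule eB[OF _ H2]) (use False in simp_all)
    then have "e (2^l) / sqrt (2^l) \<le> (9 * sqrt (real (2^l)) * U (2^l) + 12 * sqrt (real m) * R) / sqrt (2^l)"
      by (intro divide_right_mono) auto
    also have "\<dots> = 9 * U (2^l) + (12 * sqrt (real m) * R) * (1 / sqrt (2^l))"
      by (simp add: field_simps)
    finally show ?thesis using False by simp
  qed
  have "(\<Sum>l<n. e (2^l) / sqrt (2^l)) \<le> (\<Sum>l<n. (36 * R / sqrt (real m)) * (if 2^l \<le> m then sqrt (2^l) else 0)
      + 9 * (if 2^l > m then U (2^l) else 0) + (12 * sqrt (real m) * R) * (if 2^l > m then 1 / sqrt (2^l) else 0))"
    by (rule sum_mono) (rule pt)
  also have "\<dots> = (36 * R / sqrt (real m)) * (\<Sum>l<n. if 2^l \<le> m then sqrt (2^l) else 0)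
      + 9 * (\<Sum>l<n. if 2^l > m then U (2^l) else 0) + (12 * sqrt (real m) * R) * (\<Sum>l<n. if 2^l > m then 1 / sqrt (2^l) else 0)"
    by (simp add: sum.distrib sum_distrib_left)
  also have "\<dots> \<le> (36 * R / sqrt (real m)) * (4 * sqrt (real m)) + 9 * (3 * R) + (12 * sqrt (real m) * R) * (4 / sqrt (real m))"
    using R_nn m0 G1[of m n] G2[OF m1, of n] G3[of n] by (intro add_mono mult_left_mono) auto
  also have "\<dots> = 219 * R" using m0 by (simp add: field_simps)
  finally show ?thesis .
qed

end


lemma sum_lessThan_diff:
  fixes f :: "nat \<Rightarrow> real"
  assumes "a \<le> b"
  shows "(\<Sum>i<b. f i) - (\<Sum>i<a. f i) = (\<Sum>i<b-a. f (i + a))"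
proof -
  have "(\<Sum>i<b. f i) - (\<Sum>i<a. f i) = (\<Sum>i\<in>{a..<b}. f i)"
    using sum_diff_nat_ivl[of 0 a b f] assms by (simp add: atLeast0LessThan)
  also have "\<dots> = (\<Sum>i\<in>{0+a..<(b-a)+a}. f i)" using assms by simp
  also have "\<dots> = (\<Sum>i\<in>{0..<b-a}. f (i + a))" by (rule sum.shift_bounds_nat_ivl)
  finally show ?thesis by (simp add: atLeast0LessThan)
qed

context stat_Z
begin

definition Sx :: "nat \<Rightarrow> 'a \<Rightarrow> real" where "Sx k x = (\<Sum>i<k. Z ((T ^^ i) x))"
definition aa :: "nat \<Rightarrow> real" where "aa k = L2norm M (E 0 (Sx k))"

lemma Sx_sqi: "sqi M (Sx k)" unfolding Sx_def by (intro sqi_sum sqi_Tk[OF Zs])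
lemma Sx_int: "integrable M (Sx k)" by (rule sqi_integrable[OF Sx_sqi])

lemma E0_shift_norm:
  assumes W: "sqi M W"
  shows "L2norm M (E 0 (\<lambda>x. W ((T ^^ j) x))) \<le> L2norm M (E 0 W)"
proof -
  have Wi: "integrable M W" by (rule sqi_integrable[OF W])
  have Wj: "integrable M (\<lambda>x. W ((T ^^ j) x))" by (rule integrable_Tk[OF Wi])
  have Wjm: "(\<lambda>x. W ((T ^^ j) x)) \<in> borel_measurable M" using Wj by auto
  have h: "sqi M (\<lambda>x. E 0 W ((T ^^ j) x))" by (rule sqi_Tk[OF E_sqi(1)[OF W]])
  have hm: "(\<lambda>x. E 0 W ((T ^^ j) x)) \<in> borel_measurable M" using h by (simp add: sqi_def)
  have a1: "AE x in M. E 0 (E j (\<lambda>x. W ((T ^^ j) x))) x = E 0 (\<lambda>x. W ((T ^^ j) x)) x"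
    by (rule E_tower[OF _ Wj]) simp
  have a2: "AE x in M. E 0 (E j (\<lambda>x. W ((T ^^ j) x))) x = E 0 (\<lambda>x. E 0 W ((T ^^ j) x)) x"
    by (rule E_cong[OF E_shift[OF Wi]]) (auto simp: hm)
  have "L2norm M (E 0 (\<lambda>x. W ((T ^^ j) x))) = L2norm M (E 0 (\<lambda>x. E 0 W ((T ^^ j) x)))"
    by (rule L2norm_cong_AE) (use a1 a2 in auto)
  also have "\<dots> \<le> L2norm M (\<lambda>x. E 0 W ((T ^^ j) x))" by (rule E_sqi(2)[OF h])
  also have "\<dots> = L2norm M (E 0 W)" by (rule L2norm_Tk) simp
  finally show ?thesis .
qed

lemma Sx_split:
  assumes "j \<le> k"
  shows "Sx k x = Sx j x + Sx (k - j) ((T ^^ j) x)"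
proof -
  have "Sx k x - Sx j x = (\<Sum>i<k-j. Z ((T ^^ (i + j)) x))"
    unfolding Sx_def by (rule sum_lessThan_diff[OF assms])
  also have "\<dots> = Sx (k - j) ((T ^^ j) x)" unfolding Sx_def by (simp add: funpow_add)
  finally show ?thesis by simp
qed

lemma aa_nn: "aa k \<ge> 0" by (simp add: aa_def)

lemma aa_subadd:
  assumes "j < k"
  shows "aa j \<le> aa k + aa (k - j)"
proof -
  define W where "W = Sx (k - j)"
  have Ws: "sqi M W" unfolding W_def by (rule Sx_sqi)
  have Wj: "sqi M (\<lambda>x. W ((T ^^ j) x))" by (rule sqi_Tk[OF Ws])
  have eq: "Sx j = (\<lambda>x. Sx k x - W ((T ^^ j) x))"
    using Sx_split[of j k] assms by (auto simp: W_def)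
  have "AE x in M. E 0 (Sx j) x = E 0 (Sx k) x - E 0 (\<lambda>x. W ((T ^^ j) x)) x"
    unfolding eq by (rule E_diff[OF Sx_int sqi_integrable[OF Wj]])
  then have "aa j = L2norm M (\<lambda>x. E 0 (Sx k) x - E 0 (\<lambda>x. W ((T ^^ j) x)) x)"
    unfolding aa_def by (intro L2norm_cong_AE) auto
  also have "\<dots> \<le> aa k + L2norm M (E 0 (\<lambda>x. W ((T ^^ j) x)))"
    unfolding aa_def by (rule L2_triangle_diff[OF E_sqi(1)[OF Sx_sqi] E_sqi(1)[OF Wj]])
  also have "L2norm M (E 0 (\<lambda>x. W ((T ^^ j) x))) \<le> aa (k - j)"
    unfolding aa_def W_def by (rule E0_shift_norm[OF Sx_sqi])
  finally show ?thesis by simp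
qed

end


context stat_Z
begin

lemma Tadd: "(T ^^ a) ((T ^^ b) y) = (T ^^ (a + b)) y"
  by (simp add: funpow_add)

definition Vm :: "nat \<Rightarrow> 'a \<Rightarrow> real" where "Vm m y = (\<Sum>s<m. Z ((T ^^ (s + 1)) y))"
definition Y0 :: "nat \<Rightarrow> 'a \<Rightarrow> real" where "Y0 m x = (1 / real m) * E 0 (Vm m) x"

lemma Vm_sqi: "sqi M (Vm m)" unfolding Vm_def by (intro sqi_sum sqi_Tk[OF Zs])

lemma Vm_shift: "Vm m ((T ^^ i) y) = Sx (i + m + 1) y - Sx (i + 1) y"
proof -
  have "Sx (i + m + 1) y - Sx (i + 1) y = (\<Sum>s<m. Z ((T ^^ (s + (i + 1))) y))"
    unfolding Sx_def using sum_lessThan_diff[of "i+1" "i+m+1" "\<lambda>j. Z ((T ^^ j) y)"] by simp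
  also have "\<dots> = Vm m ((T ^^ i) y)"
    unfolding Vm_def by (intro sum.cong refl) (simp add: Tadd add_ac)
  finally show ?thesis by simp
qed

lemma Vm_sum: "(\<Sum>i<L. Vm m ((T ^^ i) y)) = (\<Sum>s<m. Sx (L + s + 1) y - Sx (s + 1) y)"
proof -
  have "(\<Sum>i<L. Vm m ((T ^^ i) y)) = (\<Sum>i<L. \<Sum>s<m. Z ((T ^^ (i + (s + 1))) y))"
    unfolding Vm_def by (intro sum.cong refl) (simp add: Tadd add_ac)
  also have "\<dots> = (\<Sum>s<m. \<Sum>i<L. Z ((T ^^ (i + (s + 1))) y))" by (rule sum.swap)
  also have "\<dots> = (\<Sum>s<m. Sx (L + s + 1) y - Sx (s + 1) y)"
  proof (intro sum.cong refl)
    fix s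
    show "(\<Sum>i<L. Z ((T ^^ (i + (s + 1))) y)) = Sx (L + s + 1) y - Sx (s + 1) y"
      unfolding Sx_def using sum_lessThan_diff[of "s+1" "L+s+1" "\<lambda>j. Z ((T ^^ j) y)"] by simp
  qed
  finally show ?thesis .
qed

lemma Y0_meas0: "Y0 m \<in> borel_measurable (Fk 0)"
  unfolding Y0_def by (intro borel_measurable_times borel_measurable_const) simp

lemma Y0_F0: "Y0 m \<in> borel_measurable F0" using Y0_meas0 meas_Fk0_iff by simp

lemma Y0_sqi: "sqi M (Y0 m)" unfolding Y0_def by (intro sqi_cmult E_sqi(1)[OF Vm_sqi])

lemma condE_eq: "condE M T F0 (int k) f = E k f"
  by (simp add: condE_def filt_def Tpow_def E_def Fk_def)

lemma Ym_ae: "AE x in M. Ym M T F0 Z (int k) m x = Y0 m ((T ^^ k) x)"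
proof -
  have inner: "(\<lambda>y. \<Sum>i\<in>{1..m}. Xs M T Z (int k + int i) y) = (\<lambda>y. Vm m ((T ^^ k) y))"
  proof
    fix y
    have "(\<Sum>i\<in>{1..m}. Xs M T Z (int k + int i) y) = (\<Sum>i\<in>{Suc 0..m}. Z ((T ^^ (k + i)) y))"
      by (intro sum.cong) (auto simp: Xs_def Tpow_def nat_add_distrib)
    also have "\<dots> = (\<Sum>s<m. Z ((T ^^ (k + Suc s)) y))" by (rule sum.atLeast1_atMost_eq)
    also have "\<dots> = Vm m ((T ^^ k) y)"
      unfolding Vm_def by (intro sum.cong refl) (simp add: Tadd add_ac)
    finally show "(\<Sum>i\<in>{1..m}. Xs M T Z (int k + int i) y) = Vm m ((T ^^ k) y)" .
  qed
  have "AE x in M. E k (\<lambda>y. Vm m ((T ^^ k) y)) x = E 0 (Vm m) ((T ^^ k) x)"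
    by (rule E_shift[OF sqi_integrable[OF Vm_sqi]])
  then show ?thesis
    unfolding Ym_def condE_eq inner by eventually_elim (simp add: Y0_def)
qed

definition FY :: "nat \<Rightarrow> nat \<Rightarrow> 'a \<Rightarrow> real" where
  "FY m L x = (1 / real m) * (\<Sum>i<L. E 0 (\<lambda>y. Vm m ((T ^^ i) y)) x)"

lemma FY_meas: "FY m L \<in> borel_measurable M"
  unfolding FY_def by measurable

lemma EY_ae: "AE x in M. E 0 (\<lambda>x. \<Sum>i<L. Y0 m ((T ^^ i) x)) x = FY m L x"
proof -
  define G where "G = (\<lambda>x. \<Sum>i<L. E 0 (Vm m) ((T ^^ i) x))"
  have Vi: "integrable M (Vm m)" by (rule sqi_integrable[OF Vm_sqi])
  have Gi_each: "integrable M (\<lambda>x. E 0 (Vm m) ((T ^^ i) x))" for i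
    by (rule integrable_Tk[OF E_int[OF Vi]])
  have Gi: "integrable M G" unfolding G_def using Gi_each by auto
  have eq: "(\<lambda>x. \<Sum>i<L. Y0 m ((T ^^ i) x)) = (\<lambda>x. (1 / real m) * G x)"
    by (simp add: G_def Y0_def sum_distrib_left)
  have s1: "AE x in M. E 0 (\<lambda>x. (1 / real m) * G x) x = (1 / real m) * E 0 G x"
    by (rule E_cmult[OF Gi])
  have s2: "AE x in M. E 0 G x = (\<Sum>i<L. E 0 (\<lambda>x. E 0 (Vm m) ((T ^^ i) x)) x)"
    unfolding G_def by (rule E_sum[OF Gi_each])
  have s3: "AE x in M. E 0 (\<lambda>x. E 0 (Vm m) ((T ^^ i) x)) x = E 0 (\<lambda>y. Vm m ((T ^^ i) y)) x" for i
  proof -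
    have Vti: "integrable M (\<lambda>y. Vm m ((T ^^ i) y))" by (rule integrable_Tk[OF Vi])
    have a1: "AE x in M. E 0 (E i (\<lambda>y. Vm m ((T ^^ i) y))) x = E 0 (\<lambda>y. Vm m ((T ^^ i) y)) x"
      by (rule E_tower[OF _ Vti]) simp
    have a2: "AE x in M. E 0 (E i (\<lambda>y. Vm m ((T ^^ i) y))) x = E 0 (\<lambda>x. E 0 (Vm m) ((T ^^ i) x)) x"
      by (rule E_cong[OF E_shift[OF Vi]]) (use Gi_each in auto)
    show ?thesis using a1 a2 by eventually_elim simp
  qed
  have s3': "AE x in M. \<forall>i\<in>{..<L}. E 0 (\<lambda>x. E 0 (Vm m) ((T ^^ i) x)) x = E 0 (\<lambda>y. Vm m ((T ^^ i) y)) x"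
    using s3 by (subst AE_finite_all) auto
  show ?thesis unfolding eq using s1 s2 s3' by eventually_elim (simp add: FY_def)
qed

lemma EVi_sqi: "sqi M (E 0 (\<lambda>y. Vm m ((T ^^ i) y)))"
  by (rule E_sqi(1)[OF sqi_Tk[OF Vm_sqi]])

lemma FY_H1: "L2norm M (FY m L) \<le> (1 / real m) * (\<Sum>i<L. aa (i + m + 1) + aa (i + 1))"
proof -
  have eq: "L2norm M (FY m L) = (1 / real m) * L2norm M (\<lambda>x. \<Sum>i<L. E 0 (\<lambda>y. Vm m ((T ^^ i) y)) x)"
    unfolding FY_def L2norm_cmult by simp
  have "L2norm M (\<lambda>x. \<Sum>i<L. E 0 (\<lambda>y. Vm m ((T ^^ i) y)) x) \<le> (\<Sum>i<L. L2norm M (E 0 (\<lambda>y. Vm m ((T ^^ i) y))))"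
    by (rule L2_sum) (rule EVi_sqi)
  also have "\<dots> \<le> (\<Sum>i<L. aa (i + m + 1) + aa (i + 1))"
  proof (rule sum_mono)
    fix i
    have e: "(\<lambda>y. Vm m ((T ^^ i) y)) = (\<lambda>y. Sx (i + m + 1) y - Sx (i + 1) y)"
      using Vm_shift by auto
    have "AE x in M. E 0 (\<lambda>y. Sx (i + m + 1) y - Sx (i + 1) y) x = E 0 (Sx (i + m + 1)) x - E 0 (Sx (i + 1)) x"
      by (rule E_diff[OF Sx_int Sx_int])
    then have "L2norm M (E 0 (\<lambda>y. Vm m ((T ^^ i) y))) = L2norm M (\<lambda>x. E 0 (Sx (i + m + 1)) x - E 0 (Sx (i + 1)) x)"
      unfolding e by (intro L2norm_cong_AE) auto
    also have "\<dots> \<le> aa (i + m + 1) + aa (i + 1)"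
      unfolding aa_def by (rule L2_triangle_diff[OF E_sqi(1)[OF Sx_sqi] E_sqi(1)[OF Sx_sqi]])
    finally show "L2norm M (E 0 (\<lambda>y. Vm m ((T ^^ i) y))) \<le> aa (i + m + 1) + aa (i + 1)" .
  qed
  finally show ?thesis unfolding eq by (intro mult_left_mono) auto
qed

lemma FY_H2: "L2norm M (FY m L) \<le> (1 / real m) * (\<Sum>s<m. aa (L + s + 1) + aa (s + 1))"
proof -
  have Vti: "\<And>i. integrable M (\<lambda>y. Vm m ((T ^^ i) y))"
    by (rule integrable_Tk[OF sqi_integrable[OF Vm_sqi]])
  have a1: "AE x in M. E 0 (\<lambda>x. \<Sum>i<L. Vm m ((T ^^ i) x)) x = (\<Sum>i<L. E 0 (\<lambda>y. Vm m ((T ^^ i) y)) x)"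
    by (rule E_sum[OF Vti])
  have eq: "(\<lambda>x. \<Sum>i<L. Vm m ((T ^^ i) x)) = (\<lambda>x. \<Sum>s<m. Sx (L + s + 1) x - Sx (s + 1) x)"
    using Vm_sum by auto
  have di: "\<And>s. integrable M (\<lambda>x. Sx (L + s + 1) x - Sx (s + 1) x)"
    using Sx_int by auto
  have a2: "AE x in M. E 0 (\<lambda>x. \<Sum>s<m. Sx (L + s + 1) x - Sx (s + 1) x) x
      = (\<Sum>s<m. E 0 (\<lambda>x. Sx (L + s + 1) x - Sx (s + 1) x) x)"
    by (rule E_sum[OF di])
  have a3: "AE x in M. \<forall>s\<in>{..<m}. E 0 (\<lambda>x. Sx (L + s + 1) x - Sx (s + 1) x) x = E 0 (Sx (L + s + 1)) x - E 0 (Sx (s + 1)) x"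
    using E_diff[OF Sx_int Sx_int] by (subst AE_finite_all) auto
  have "AE x in M. FY m L x = (1 / real m) * (\<Sum>s<m. E 0 (Sx (L + s + 1)) x - E 0 (Sx (s + 1)) x)"
    using a1 a2 a3 unfolding eq by eventually_elim (simp add: FY_def)
  then have eq1: "L2norm M (FY m L) = L2norm M (\<lambda>x. (1 / real m) * (\<Sum>s<m. E 0 (Sx (L + s + 1)) x - E 0 (Sx (s + 1)) x))"
    by (intro L2norm_cong_AE) (auto simp: FY_meas)
  have eq2: "L2norm M (\<lambda>x. (1 / real m) * (\<Sum>s<m. E 0 (Sx (L + s + 1)) x - E 0 (Sx (s + 1)) x)) = (1 / real m) * L2norm M (\<lambda>x. \<Sum>s<m. E 0 (Sx (L + s + 1)) x - E 0 (Sx (s + 1)) x)"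
    unfolding L2norm_cmult by simp
  have "L2norm M (\<lambda>x. \<Sum>s<m. E 0 (Sx (L + s + 1)) x - E 0 (Sx (s + 1)) x)
     \<le> (\<Sum>s<m. L2norm M (\<lambda>x. E 0 (Sx (L + s + 1)) x - E 0 (Sx (s + 1)) x))"
    by (rule L2_sum) (intro sqi_diff E_sqi(1)[OF Sx_sqi])
  also have "\<dots> \<le> (\<Sum>s<m. aa (L + s + 1) + aa (s + 1))"
    unfolding aa_def by (intro sum_mono L2_triangle_diff E_sqi(1)[OF Sx_sqi])
  finally show ?thesis unfolding eq1 eq2 by (intro mult_left_mono) auto
qed

lemma Qn_Y0: "Qn M T F0 (Y0 m) L = L2norm M (FY m L)"
proof -
  have "Qn M T F0 (Y0 m) L = L2norm M (E 0 (\<lambda>x. \<Sum>i<L. Y0 m ((T ^^ i) x)))"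
    by (simp add: Qn_def E0_eq)
  also have "\<dots> = L2norm M (FY m L)"
    by (rule L2norm_cong_AE[OF EY_ae]) (auto simp: FY_meas)
  finally show ?thesis .
qed

end


lemma exists_r: "n \<ge> 1 \<Longrightarrow> \<exists>r. n \<le> 2^r \<and> 2^r < 2 * (n::nat)"
proof -
  assume n: "n \<ge> 1"
  define r where "r = (LEAST r. n \<le> 2^r)"
  have ex: "n \<le> 2^n" using less_exp[of n] by linarith
  have r1: "n \<le> 2^r" unfolding r_def by (rule LeastI[of _ n]) (rule ex)
  have r2: "2^r < 2 * n"
  proof (cases r)
    case 0 then show ?thesis using n by simp
  next
    case (Suc r')
    have "r' < r" using Suc by simp
    then have "\<not> n \<le> 2^r'" unfolding r_def by (rule not_less_Least)
    then show ?thesis using Suc by simp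
  qed
  show ?thesis using r1 r2 by blast
qed

lemma powr32: "real k powr (3/2) = real k * sqrt (real k)"
proof (cases "k = 0")
  case False
  have "real k powr (3/2) = real k powr (1 + 1/2)" by simp
  also have "\<dots> = real k powr 1 * real k powr (1/2)" by (rule powr_add)
  also have "\<dots> = real k * sqrt (real k)" using False by (simp add: powr_half_sqrt)
  finally show ?thesis .
qed simp

context stat_Z
begin

lemma acoef_eq: "acoef M T F0 Z k = aa k / (real k * sqrt (real k))"
proof -
  have c: "condE M T F0 0 f = E 0 f" for f using condE_eq[of 0 f] by simp
  have s: "Ssum M T Z k = Sx k" by (rule ext) (simp add: Ssum_def Xs_def Tpow_def Sx_def)
  show ?thesis unfolding acoef_def c s powr32 aa_def by simp
qed

lemma Ym_meas: "Ym M T F0 Z (int k) m \<in> borel_measurable M"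
  unfolding Ym_def condE_eq by measurable

lemma Max_Ym_eq:
  "L2norm M (\<lambda>x. Max ((\<lambda>j. \<bar>\<Sum>k<j. Ym M T F0 Z (int k) m x\<bar>) ` {1..n})) = MXn M T (Y0 m) n"
proof -
  have "AE x in M. \<forall>k\<in>{..<n}. Ym M T F0 Z (int k) m x = Y0 m ((T ^^ k) x)"
    using Ym_ae by (subst AE_finite_all) auto
  then have ae: "AE x in M. Max ((\<lambda>j. \<bar>\<Sum>k<j. Ym M T F0 Z (int k) m x\<bar>) ` {1..n})
      = Max ((\<lambda>j. \<bar>\<Sum>i<j. Y0 m ((T ^^ i) x)\<bar>) ` {1..n})"
  proof eventually_elim
    case (elim x)
    have "(\<lambda>j. \<bar>\<Sum>k<j. Ym M T F0 Z (int k) m x\<bar>) ` {1..n} = (\<lambda>j. \<bar>\<Sum>i<j. Y0 m ((T ^^ i) x)\<bar>) ` {1..n}"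
    proof (rule image_cong[OF refl])
      fix j assume "j \<in> {1..n}"
      then show "\<bar>\<Sum>k<j. Ym M T F0 Z (int k) m x\<bar> = \<bar>\<Sum>i<j. Y0 m ((T ^^ i) x)\<bar>"
        using elim by (intro arg_cong[where f=abs] sum.cong) auto
    qed
    then show ?case by simp
  qed
  have m1: "(\<lambda>x. Max ((\<lambda>j. \<bar>\<Sum>k<j. Ym M T F0 Z (int k) m x\<bar>) ` {1..n})) \<in> borel_measurable M"
    using Ym_meas by (intro borel_measurable_Max borel_measurable_abs borel_measurable_sum) auto
  have Y0M: "(\<lambda>x. Y0 m ((T ^^ i) x)) \<in> borel_measurable M" for i
    using sqi_Tk[OF Y0_sqi] by (simp add: sqi_def)
  have m2: "(\<lambda>x. Max ((\<lambda>j. \<bar>\<Sum>i<j. Y0 m ((T ^^ i) x)\<bar>) ` {1..n})) \<in> borel_measurable M"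
    using Y0M by (intro borel_measurable_Max borel_measurable_abs borel_measurable_sum) auto
  show ?thesis unfolding MXn_def by (rule L2norm_cong_AE[OF ae m1 m2])
qed

lemma MXn_mono:
  assumes "1 \<le> n" "n \<le> N" "sqi M W"
  shows "MXn M T W n \<le> MXn M T W N"
proof -
  have WT: "sqi M (\<lambda>x. W ((T ^^ i) x))" for i by (rule sqi_Tk[OF assms(3)])
  have sN: "sqi M (\<lambda>x. Max ((\<lambda>j. \<bar>\<Sum>i<j. W ((T ^^ i) x)\<bar>) ` {1..N}))"
    using assms WT by (intro sqi_Max_abs sqi_sum) auto
  have mn: "(\<lambda>x. Max ((\<lambda>j. \<bar>\<Sum>i<j. W ((T ^^ i) x)\<bar>) ` {1..n})) \<in> borel_measurable M"
    using WT by (intro borel_measurable_Max borel_measurable_abs borel_measurable_sum) (auto simp: sqi_def)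
  show ?thesis unfolding MXn_def
  proof (rule L2_mono[OF sN mn AE_I2])
    fix x
    let ?f = "\<lambda>j. \<bar>\<Sum>i<j. W ((T ^^ i) x)\<bar>"
    have ne: "?f ` {1..n} \<noteq> {}" using assms by auto
    have sub: "?f ` {1..n} \<subseteq> ?f ` {1..N}" using assms by auto
    have le: "Max (?f ` {1..n}) \<le> Max (?f ` {1..N})" by (rule Max_mono[OF sub ne]) auto
    have "1 \<in> {1..n}" using assms by simp
    then have "?f 1 \<le> Max (?f ` {1..n})" by (intro Max_ge finite_imageI imageI) auto
    then have nn: "0 \<le> Max (?f ` {1..n})" by (meson abs_ge_zero order_trans)
    show "\<bar>Max (?f ` {1..n})\<bar> \<le> \<bar>Max (?f ` {1..N})\<bar>" using le nn by simp
  qed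
qed

end


lemma div_alg:
  fixes q :: "nat \<Rightarrow> real" and n r :: nat
  assumes q: "\<And>l. q l \<ge> 0" and n: "n \<ge> 1" and r: "2^r < 2 * n"
    and Mb: "MM \<le> q r + 9 * (\<Sum>l<r. sqrt (2^(r-l-1)) * q l)"
    and B: "(\<Sum>l<Suc r. q l / sqrt (2^l)) \<le> B"
  shows "(1 / sqrt (real n)) * MM \<le> 14 * B"
proof -
  define s where "s = sqrt (real n)"
  have s0: "s > 0" using n by (simp add: s_def)
  have "real (2^r) \<le> real (2 * n)" using r by (simp only: of_nat_le_iff)
  then have "(2::real)^r \<le> 2 * real n" by simp
  then have "sqrt (2^r) \<le> sqrt (2 * real n)" by (rule real_sqrt_le_mono)
  then have us: "sqrt (2^r) \<le> sqrt 2 * s" by (simp add: s_def real_sqrt_mult)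
  have t1: "(1 / s) * q r \<le> sqrt 2 * (q r / sqrt (2^r))"
  proof -
    have p: "sqrt ((2::real)^r) > 0" by simp
    have "(1 / s) * q r = (sqrt (2^r) / s) * (q r / sqrt (2^r))" using p s0 by (simp add: field_simps)
    also have "\<dots> \<le> sqrt 2 * (q r / sqrt (2^r))"
      using us s0 q[of r] p by (intro mult_right_mono) (auto simp: field_simps)
    finally show ?thesis .
  qed
  have t2: "(1 / s) * (sqrt (2^(r-l-1)) * q l) \<le> q l / sqrt (2^l)" if "l < r" for l
  proof -
    have e: "(2::real)^(r-l-1) * 2 * 2^l = 2^r"
    proof -
      have "(2::real)^(r-l-1) * 2 * 2^l = 2^((r-l-1) + 1 + l)" by (simp add: power_add)
      also have "(r-l-1) + 1 + l = r" using that by simp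
      finally show ?thesis .
    qed
    have e2: "sqrt ((2::real)^(r-l-1)) * sqrt 2 * sqrt (2^l) = sqrt (2^r)"
      using e by (simp add: real_sqrt_mult[symmetric])
    have p: "sqrt ((2::real)^l) > 0" "sqrt (2::real) > 0" by simp_all
    have "(1 / s) * (sqrt (2^(r-l-1)) * q l) = (sqrt (2^r) / (sqrt 2 * s)) * (q l / sqrt (2^l))"
      using p s0 e2[symmetric] by (simp add: field_simps)
    also have "\<dots> \<le> 1 * (q l / sqrt (2^l))"
      using us s0 p q[of l] by (intro mult_right_mono) (auto simp: field_simps)
    finally show ?thesis by simp
  qed
  have "(1 / s) * MM \<le> (1 / s) * (q r + 9 * (\<Sum>l<r. sqrt (2^(r-l-1)) * q l))"
    using Mb s0 by (intro mult_left_mono) auto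
  also have "\<dots> = (1 / s) * q r + 9 * (\<Sum>l<r. (1 / s) * (sqrt (2^(r-l-1)) * q l))"
    by (simp add: algebra_simps sum_distrib_left)
  also have "\<dots> \<le> sqrt 2 * (q r / sqrt (2^r)) + 9 * (\<Sum>l<r. q l / sqrt (2^l))"
    using t1 t2 by (intro add_mono mult_left_mono sum_mono) auto
  also have "\<dots> \<le> 14 * (q r / sqrt (2^r)) + 14 * (\<Sum>l<r. q l / sqrt (2^l))"
  proof -
    have a: "q r / sqrt (2^r) \<ge> 0" using q by simp
    have b: "(\<Sum>l<r. q l / sqrt (2^l)) \<ge> 0" using q by (intro sum_nonneg) simp
    show ?thesis using sqrt2_bounds a b by (intro add_mono mult_right_mono) auto
  qed
  also have "\<dots> = 14 * (\<Sum>l<Suc r. q l / sqrt (2^l))" by (simp add: algebra_simps)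
  also have "\<dots> \<le> 14 * B" using B by simp
  finally show ?thesis by (simp add: s_def)
qed

context stat_Z
begin

lemma st: "stat M T F0" by (rule stat.intro[OF PS Tm Tpres sub nest])

lemma main1:
  assumes num: "numer aa m" and n: "n \<ge> 1"
  shows "(1 / sqrt (real n)) * MXn M T (Y0 m) n \<le> 3066 * numer.R aa m"
proof -
  interpret N: numer aa m by (rule num)
  obtain r where r: "n \<le> 2^r" "2^r < 2 * n" using exists_r[OF n] by blast
  define q where "q l = Qn M T F0 (Y0 m) (2^l)" for l
  have q0: "q l \<ge> 0" for l by (simp add: q_def Qn_def)
  have H1: "Qn M T F0 (Y0 m) L \<le> (1 / real m) * (\<Sum>i<L. aa (i + m + 1) + aa (i + 1))" if "1 \<le> L" for L
    unfolding Qn_Y0 by (rule FY_H1)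
  have H2: "Qn M T F0 (Y0 m) L \<le> (1 / real m) * (\<Sum>t\<in>{1..m}. aa (L + t) + aa t)" if "1 \<le> L" for L
  proof -
    have "(\<Sum>t\<in>{1..m}. aa (L + t) + aa t) = (\<Sum>s<m. aa (L + Suc s) + aa (Suc s))"
      using sum.atLeast1_atMost_eq[of "\<lambda>t. aa (L + t) + aa t" m] by simp
    then show ?thesis unfolding Qn_Y0 using FY_H2[of m L] by simp
  qed
  have tot: "(\<Sum>l<Suc r. q l / sqrt (2^l)) \<le> 219 * N.R"
    unfolding q_def by (rule N.total[OF H1 H2])
  have "MXn M T (Y0 m) n \<le> MXn M T (Y0 m) (2^r)" by (rule MXn_mono[OF n r(1) Y0_sqi])
  also have "\<dots> \<le> q r + 9 * (\<Sum>l<r. sqrt (2^(r-l-1)) * q l)"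
    unfolding q_def by (rule maxineq[OF st Y0_F0 Y0_sqi])
  finally have Mb: "MXn M T (Y0 m) n \<le> q r + 9 * (\<Sum>l<r. sqrt (2^(r-l-1)) * q l)" .
  have "(1 / sqrt (real n)) * MXn M T (Y0 m) n \<le> 14 * (219 * N.R)"
    by (rule div_alg[OF q0 n r(2) Mb tot])
  then show ?thesis by simp
qed

lemma Ym_sqi: "sqi M (Ym M T F0 Z (int k) m)"
proof (rule sqi_cong_AE[OF sqi_Tk[OF Y0_sqi, of m k] Ym_meas])
  show "AE x in M. Y0 m ((T ^^ k) x) = Ym M T F0 Z (int k) m x" using Ym_ae[of k m] by auto
qed

lemma main2:
  assumes K: "K \<ge> 0"
    and H: "\<And>n. n \<ge> 1 \<Longrightarrow> (1 / sqrt (real n)) *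
       L2norm M (\<lambda>x. Max ((\<lambda>j. \<bar>\<Sum>k<j. Ym M T F0 Z (int k) m x\<bar>) ` {1..n})) \<le> K"
  shows "plus_norm M (\<lambda>k. Ym M T F0 Z (int k) m) \<le> ereal K"
proof -
  define L where "L = limsup (\<lambda>n. ereal (integral\<^sup>L M (\<lambda>x. (\<Sum>k<n. Ym M T F0 Z (int k) m x)^2) / real n))"
  have ev: "ereal (integral\<^sup>L M (\<lambda>x. (\<Sum>k<n. Ym M T F0 Z (int k) m x)^2) / real n) \<le> ereal (K^2)" for n
  proof (cases "n = 0")
    case True then show ?thesis by simp
  next
    case False
    then have n: "n \<ge> 1" by simp
    let ?Mx = "\<lambda>x. Max ((\<lambda>j. \<bar>\<Sum>k<j. Ym M T F0 Z (int k) m x\<bar>) ` {1..n})"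
    have smx: "sqi M ?Mx" using n Ym_sqi by (intro sqi_Max_abs sqi_sum) auto
    have sm: "(\<lambda>x. \<Sum>k<n. Ym M T F0 Z (int k) m x) \<in> borel_measurable M"
      using Ym_meas by (intro borel_measurable_sum) auto
    have le1: "L2norm M (\<lambda>x. \<Sum>k<n. Ym M T F0 Z (int k) m x) \<le> L2norm M ?Mx"
    proof (rule L2_mono[OF smx sm AE_I2])
      fix x
      have "n \<in> {1..n}" using n by simp
      then have "\<bar>\<Sum>k<n. Ym M T F0 Z (int k) m x\<bar> \<le> ?Mx x" by (intro Max_ge finite_imageI imageI) auto
      then show "\<bar>\<Sum>k<n. Ym M T F0 Z (int k) m x\<bar> \<le> \<bar>?Mx x\<bar>" by simp
    qed
    have s0: "sqrt (real n) > 0" using n by simp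
    have "L2norm M ?Mx \<le> K * sqrt (real n)"
      using H[OF n] s0 by (simp add: field_simps)
    then have le2: "L2norm M (\<lambda>x. \<Sum>k<n. Ym M T F0 Z (int k) m x) \<le> K * sqrt (real n)" using le1 by linarith
    have "integral\<^sup>L M (\<lambda>x. (\<Sum>k<n. Ym M T F0 Z (int k) m x)^2) = (L2norm M (\<lambda>x. \<Sum>k<n. Ym M T F0 Z (int k) m x))^2"
      by (simp add: L2norm_sq)
    also have "\<dots> \<le> (K * sqrt (real n))^2" using le2 by (intro power_mono) auto
    also have "\<dots> = K^2 * real n" by (simp add: power_mult_distrib)
    finally have "integral\<^sup>L M (\<lambda>x. (\<Sum>k<n. Ym M T F0 Z (int k) m x)^2) / real n \<le> K^2"
      using n by (simp add: field_simps)
    then show ?thesis by simp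
  qed
  have LK: "L \<le> ereal (K^2)" unfolding L_def
    by (rule Limsup_bounded) (use ev in auto)
  then have Linf: "L \<noteq> \<infinity>" by auto
  have "real_of_ereal L \<le> K^2"
  proof (cases L)
    case (real x) then show ?thesis using LK by simp
  next
    case PInf then show ?thesis using Linf by simp
  next
    case MInf then show ?thesis by simp
  qed
  then have "sqrt (real_of_ereal L) \<le> sqrt (K^2)" by (rule real_sqrt_le_mono)
  then have "sqrt (real_of_ereal L) \<le> K" using K by (simp only: real_sqrt_abs)
  then show ?thesis unfolding plus_norm_def Let_def L_def[symmetric] using Linf by simp
qed

end


theorem mainTheorem3:
  fixes M :: "'a measure" and T :: "'a \<Rightarrow> 'a" and F0 :: "'a measure" and X0 :: "'a \<Rightarrow> real"
  assumes "prob_space M"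
    and "bij_betw T (space M) (space M)"
    and "T \<in> M \<rightarrow>\<^sub>M M"
    and "inv_into (space M) T \<in> M \<rightarrow>\<^sub>M M"
    and "distr M M T = M"
    and "subalgebra M F0"
    and "sets F0 \<subseteq> sets (vimage_algebra (space M) T F0)"
    and "X0 \<in> borel_measurable F0"
    and "integrable M (\<lambda>x. (X0 x)^2)"
    and "integral\<^sup>L M X0 = 0"
    and "summable (\<lambda>k. acoef M T F0 X0 (Suc k))"
  shows "\<exists>C>0. \<forall>n\<ge>1. \<forall>m\<ge>1.
     (1 / sqrt (real n)) *
       L2norm M (\<lambda>x. Max ((\<lambda>j. \<bar>\<Sum>k<j. Ym M T F0 X0 (int k) m x\<bar>) ` {1..n}))
       \<le> C * (\<Sum>i. acoef M T F0 X0 (i + m + 1))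
   \<and> plus_norm M (\<lambda>k. Ym M T F0 X0 (int k) m) \<le> ereal (C * (\<Sum>i. acoef M T F0 X0 (i + m)))"
proof -
  have st: "stat M T F0" by (rule stat.intro) (fact assms)+
  have sq: "sqi M X0"
    using measurable_from_subalg[OF assms(6) assms(8)] assms(9) by (simp add: sqi_def)
  interpret stat_Z M T F0 X0
    by (intro stat_Z.intro st stat_Z_axioms.intro assms(8) sq)
  have num: "numer aa m" if m: "m \<ge> 1" for m
  proof (rule numer.intro)
    show "\<And>k. 0 \<le> aa k" by (rule aa_nn)
    show "\<And>j k. 0 < j \<Longrightarrow> j < k \<Longrightarrow> aa j \<le> aa k + aa (k - j)" by (rule aa_subadd)
    show "summable (\<lambda>i. aa (Suc i) / (real (Suc i) * sqrt (real (Suc i))))"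
      using assms(11) by (simp only: acoef_eq)
    show "1 \<le> m" by (rule m)
  qed
  have bR: "numer.R aa m = (\<Sum>i. acoef M T F0 X0 (i + m + 1))" if m: "m \<ge> 1" for m
  proof -
    interpret N: numer aa m by (rule num[OF m])
    show ?thesis unfolding N.R_def N.b_def acoef_eq ..
  qed
  show ?thesis
  proof (intro exI[of _ "3066::real"] conjI allI impI)
    fix n m :: nat assume n: "n \<ge> 1" and m: "m \<ge> 1"
    interpret N: numer aa m by (rule num[OF m])
    have first: "(1 / sqrt (real n')) *
       L2norm M (\<lambda>x. Max ((\<lambda>j. \<bar>\<Sum>k<j. Ym M T F0 X0 (int k) m x\<bar>) ` {1..n'}))
       \<le> 3066 * (\<Sum>i. acoef M T F0 X0 (i + m + 1))" if n': "n' \<ge> 1" for n'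
      unfolding Max_Ym_eq bR[OF m, symmetric] by (rule main1[OF num[OF m] n'])
    show "(1 / sqrt (real n)) *
       L2norm M (\<lambda>x. Max ((\<lambda>j. \<bar>\<Sum>k<j. Ym M T F0 X0 (int k) m x\<bar>) ` {1..n}))
       \<le> 3066 * (\<Sum>i. acoef M T F0 X0 (i + m + 1))" by (rule first[OF n])
    have Rnn: "(\<Sum>i. acoef M T F0 X0 (i + m + 1)) \<ge> 0" using N.R_nn bR[OF m] by simp
    have ac_nn: "acoef M T F0 X0 k \<ge> 0" for k by (simp add: acoef_def)
    have summ0: "summable (\<lambda>i. acoef M T F0 X0 (i + m))"
    proof -
      have "summable (\<lambda>i. acoef M T F0 X0 (Suc (i + (m - 1))))"
        using assms(11) summable_iff_shift[of "\<lambda>k. acoef M T F0 X0 (Suc k)" "m - 1"] by simp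
      moreover have "\<And>i. Suc (i + (m - 1)) = i + m" using m by simp
      ultimately show ?thesis by simp
    qed
    have split: "(\<Sum>i. acoef M T F0 X0 (i + m)) = acoef M T F0 X0 m + (\<Sum>i. acoef M T F0 X0 (i + m + 1))"
      using suminf_split_head[OF summ0] by simp
    have RR: "3066 * (\<Sum>i. acoef M T F0 X0 (i + m + 1)) \<le> 3066 * (\<Sum>i. acoef M T F0 X0 (i + m))"
      unfolding split using ac_nn[of m] by simp
    have "plus_norm M (\<lambda>k. Ym M T F0 X0 (int k) m) \<le> ereal (3066 * (\<Sum>i. acoef M T F0 X0 (i + m + 1)))"
      by (rule main2) (use Rnn first in auto)
    also have "\<dots> \<le> ereal (3066 * (\<Sum>i. acoef M T F0 X0 (i + m)))" using RR by simp
    finally show "plus_norm M (\<lambda>k. Ym M T F0 X0 (int k) m) \<le> ereal (3066 * (\<Sum>i. acoef M T F0 X0 (i + m)))" .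
  qed simp
qed


end
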